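(* Let $\alpha\in[0,n)$ and $T>0$. There is $C>0$ (depending on $n,\alpha,T$) such that $t^\alpha P_t(x)\le C\,\mathscr{J}_\alpha(P_t)(x)$ for all $x\in\mathbb{R}^n$ and $0<t\le T$. Consequently, for every $p\in[1,\infty]$ and nonnegative $g\in L^p(\mathbb{R}^n)$, $t^\alpha(P_t*g)(x)\le C\,(P_t*\mathscr{J}_\alpha g)(x)$ for all $x\in\mathbb{R}^n$ and $0<t\le T$.
   Context: $P_t(x)=\frac{c_nt}{(t^2+|x|^2)^{(n+1)/2}}$ is the Poisson kernel on $\mathbb{R}^n$ ($c_n$ normalising $\int P_t=1$). $\mathscr{J}_\alpha g=G_\alpha*g$ for $\alpha>0$, where $\widehat{G_\alpha}(\xi)=(1+4\pi^2|\xi|^2)^{-\alpha/2}$, and $\mathscr{J}_0$ is the identity. *)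

theory Defs
  imports "HOL-Analysis.Analysis"
begin

definition fourier :: "('a::euclidean_space \<Rightarrow> real) \<Rightarrow> 'a \<Rightarrow> complex" where
  "fourier f \<xi> = (LINT x|lborel. complex_of_real (f x) * cis (- 2 * pi * (x \<bullet> \<xi>)))"

text \<open>Bessel kernel \<open>G_\<alpha>\<close> (\<alpha> > 0): the integrable function whose Fourier transform is
  \<open>(1 + 4\<pi>^2 |\<xi>|^2)^{-\<alpha>/2}\<close> (determined up to a null set, which does not affect convolutions).\<close>
definition bessel_kernel :: "real \<Rightarrow> 'a::euclidean_space \<Rightarrow> real" where
  "bessel_kernel \<alpha> = (SOME G. G \<in> borel_measurable lborel \<and> integrable lborel G \<and>
      (\<forall>\<xi>. fourier G \<xi> = complex_of_real ((1 + 4 * pi\<^sup>2 * (norm \<xi>)\<^sup>2) powr (- \<alpha> / 2))))"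

definition conv :: "('a::euclidean_space \<Rightarrow> real) \<Rightarrow> ('a \<Rightarrow> real) \<Rightarrow> 'a \<Rightarrow> real" where
  "conv f g x = (LINT y|lborel. f y * g (x - y))"

definition bessel_pot :: "real \<Rightarrow> ('a::euclidean_space \<Rightarrow> real) \<Rightarrow> 'a \<Rightarrow> real" where
  "bessel_pot \<alpha> g = (if \<alpha> = 0 then g else conv (bessel_kernel \<alpha>) g)"

definition poisson_shape :: "real \<Rightarrow> 'a::euclidean_space \<Rightarrow> real" where
  "poisson_shape t x = t / (t\<^sup>2 + (norm x)\<^sup>2) powr ((real DIM('a) + 1) / 2)"

definition poisson_const :: "'a::euclidean_space itself \<Rightarrow> real" where
  "poisson_const _ = inverse (LINT x|lborel. poisson_shape 1 (x::'a))"

definition poisson :: "real \<Rightarrow> 'a::euclidean_space \<Rightarrow> real" where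
  "poisson t x = poisson_const TYPE('a) * poisson_shape t x"

end

theory Submission
  imports Defs "HOL-Probability.Probability"
begin


lemma borel_measurable_cis[measurable]:
  assumes "f \<in> borel_measurable M"
  shows "(\<lambda>x. cis (f x)) \<in> borel_measurable M"
proof -
  have "cis \<in> borel_measurable borel"
    by (rule borel_measurable_continuous_onI) (simp add: cis_conv_exp continuous_intros)
  from measurable_compose[OF assms this] show ?thesis by (simp add: o_def)
qed

lemma gauss_ft_1d:
  fixes a s :: real assumes a: "a > 0"
  shows "integrable lborel (\<lambda>x. exp (- a * x\<^sup>2))"
    and "(CLINT x|lborel. complex_of_real (exp (- a * x\<^sup>2)) * cis (x * s)) =
         complex_of_real (sqrt (pi / a) * exp (- s\<^sup>2 / (4 * a)))"
proof -
  define c where "c = sqrt (2 * a)"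
  have c: "c > 0" "c\<^sup>2 = 2 * a" using a by (auto simp: c_def)
  have nd: "std_normal_density (c * y) = (1 / sqrt (2 * pi)) * exp (- a * y\<^sup>2)" for y
    using c by (simp add: std_normal_density_def power_mult_distrib)
  have i1: "integrable lborel (\<lambda>y. std_normal_density (0 + c * y))"
    using lborel_integrable_real_affine[OF integrable_normal_density[of 1 0], of c 0] c by simp
  show int: "integrable lborel (\<lambda>x. exp (- a * x\<^sup>2))"
  proof -
    have "integrable lborel (\<lambda>y. sqrt (2 * pi) * std_normal_density (0 + c * y))"
      using i1 by simp
    then show ?thesis by (simp add: nd)
  qed
  have "char std_normal_distribution (s / c) = complex_of_real (exp (- ((s / c)^2) / 2))"
    by (simp add: char_std_normal_distribution)
  also have "char std_normal_distribution (s / c) = (CLINT x|lborel. std_normal_density x *\<^sub>R iexp (s / c * x))"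
    unfolding char_def
    by (subst integral_density) auto
  also have "\<dots> = c *\<^sub>R (CLINT y|lborel. std_normal_density (0 + c * y) *\<^sub>R iexp (s / c * (0 + c * y)))"
    using lborel_integral_real_affine[of c "\<lambda>x. std_normal_density x *\<^sub>R iexp (s / c * x)" 0] c by simp
  also have "(\<lambda>y. std_normal_density (0 + c * y) *\<^sub>R iexp (s / c * (0 + c * y))) =
     (\<lambda>y. complex_of_real (1 / sqrt (2 * pi)) * (complex_of_real (exp (- a * y\<^sup>2)) * cis (y * s)))"
  proof
    fix y
    have "std_normal_density (0 + c * y) = (1 / sqrt (2 * pi)) * exp (- a * y\<^sup>2)" using nd by simp
    then show "std_normal_density (0 + c * y) *\<^sub>R iexp (s / c * (0 + c * y)) =
      complex_of_real (1 / sqrt (2 * pi)) * (complex_of_real (exp (- a * y\<^sup>2)) * cis (y * s))"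
      using c by (simp add: cis_conv_exp scaleR_conv_of_real mult_ac)
  qed
  finally have "complex_of_real (exp (- ((s / c)^2) / 2)) =
      c *\<^sub>R (complex_of_real (1 / sqrt (2 * pi)) * (CLINT y|lborel. complex_of_real (exp (- a * y\<^sup>2)) * cis (y * s)))"
    by simp
  then have "(CLINT y|lborel. complex_of_real (exp (- a * y\<^sup>2)) * cis (y * s)) =
     complex_of_real (sqrt (2*pi) / c * exp (- ((s / c)^2) / 2))"
    using c by (simp add: scaleR_conv_of_real field_simps)
  also have "sqrt (2*pi) / c * exp (- ((s / c)^2) / 2) = sqrt (pi / a) * exp (- s\<^sup>2 / (4 * a))"
    using c a by (simp add: c_def power_divide real_sqrt_divide real_sqrt_mult field_simps)
  finally show "(CLINT x|lborel. complex_of_real (exp (- a * x\<^sup>2)) * cis (x * s)) =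
         complex_of_real (sqrt (pi / a) * exp (- s\<^sup>2 / (4 * a)))" .
qed


lemma norm2_euclid: "(norm (x::'a::euclidean_space))\<^sup>2 = (\<Sum>b\<in>Basis. (x \<bullet> b)\<^sup>2)"
  proof -
  have "(norm x)\<^sup>2 = x \<bullet> x" by (rule power2_norm_eq_inner)
  also have "\<dots> = (\<Sum>b\<in>Basis. (x \<bullet> b) * (x \<bullet> b))" by (rule euclidean_inner)
  finally show ?thesis by (simp add: power2_eq_square)
qed

lemma gauss_nn_integral:
  fixes a :: real assumes a: "a > 0"
  shows "(\<integral>\<^sup>+x. ennreal (exp (- a * (norm (x::'a::euclidean_space))\<^sup>2)) \<partial>lborel) < \<infinity>"
proof -
  have "(\<integral>\<^sup>+x. ennreal (exp (- a * (norm (x::'a))\<^sup>2)) \<partial>lborel) =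
        (\<integral>\<^sup>+x. (\<Prod>b\<in>Basis. ennreal (exp (- a * (x \<bullet> b)\<^sup>2))) \<partial>(lborel::'a measure))"
    apply (rule nn_integral_cong)
    apply (simp add: norm2_euclid sum_distrib_left exp_sum prod_ennreal)
    done
  also have "\<dots> = (\<Prod>b\<in>(Basis::'a set). (\<integral>\<^sup>+x. ennreal (exp (- a * x\<^sup>2)) \<partial>lborel))"
    by (rule nn_integral_lborel_prod) auto
  also have "\<dots> < \<infinity>"
  proof -
    have "integrable lborel (\<lambda>x. exp (- a * x\<^sup>2))" using gauss_ft_1d(1)[OF a] .
    then have "(\<integral>\<^sup>+x. ennreal (exp (- a * x\<^sup>2)) \<partial>lborel) < \<infinity>"
      by (simp add: integrable_iff_bounded)
    then show ?thesis by (simp add: power_less_top_ennreal)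
  qed
  finally show ?thesis .
qed

lemma gauss_integrable:
  fixes a :: real assumes a: "a > 0"
  shows "integrable lborel (\<lambda>x::'a::euclidean_space. exp (- a * (norm x)\<^sup>2))"
  using gauss_nn_integral[OF a] by (intro integrableI_bounded) auto

lemma gauss_ft:
  fixes a :: real and \<xi> :: "'a::euclidean_space" assumes a: "a > 0"
  shows "(CLINT x|lborel. complex_of_real (exp (- a * (norm x)\<^sup>2)) * cis (x \<bullet> \<xi>)) =
         complex_of_real ((pi / a) powr (real DIM('a) / 2) * exp (- (norm \<xi>)\<^sup>2 / (4 * a)))"
proof -
  interpret P: product_sigma_finite "\<lambda>_::'a. lborel::real measure"
    by standard
  define F where "F b r = complex_of_real (exp (- a * r\<^sup>2)) * cis (r * (\<xi> \<bullet> b))" for b :: 'a and r :: real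
  have Fint: "integrable lborel (F b)" for b
  proof -
    have "integrable lborel (\<lambda>r. complex_of_real (exp (- a * r\<^sup>2)))"
      using gauss_ft_1d(1)[OF a] by simp
    then show ?thesis unfolding F_def
      by (rule Bochner_Integration.integrable_bound) (auto simp: norm_mult)
  qed
  have eq: "complex_of_real (exp (- a * (norm x)\<^sup>2)) * cis (x \<bullet> \<xi>) = (\<Prod>b\<in>Basis. F b (x \<bullet> b))" for x :: 'a
  proof -
    have "complex_of_real (exp (- a * (norm x)\<^sup>2)) = (\<Prod>b\<in>Basis. complex_of_real (exp (- a * (x \<bullet> b)\<^sup>2)))"
      by (simp add: norm2_euclid sum_distrib_left exp_sum)
    moreover have "cis (x \<bullet> \<xi>) = (\<Prod>b\<in>Basis. cis ((x \<bullet> b) * (\<xi> \<bullet> b)))"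
      by (simp add: cis_conv_exp euclidean_inner[of x \<xi>] sum_distrib_left exp_sum)
    ultimately show ?thesis by (simp add: F_def prod.distrib)
  qed
  have "(CLINT x|lborel. complex_of_real (exp (- a * (norm x)\<^sup>2)) * cis (x \<bullet> \<xi>)) =
        (CLINT x|(lborel::'a measure). (\<Prod>b\<in>Basis. F b (x \<bullet> b)))"
    by (intro Bochner_Integration.integral_cong refl eq)
  also have "\<dots> = (CLINT p|(\<Pi>\<^sub>M b\<in>Basis. lborel). (\<Prod>b\<in>Basis. F b ((\<Sum>c\<in>Basis. p c *\<^sub>R c) \<bullet> b)))"
    by (subst lborel_eq) (simp add: integral_distr F_def)
  also have "\<dots> = (CLINT p|(\<Pi>\<^sub>M b\<in>Basis. lborel). (\<Prod>b\<in>Basis. F b (p b)))"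
  proof (intro Bochner_Integration.integral_cong refl prod.cong)
    fix p :: "'a \<Rightarrow> real" and b :: 'a assume b: "b \<in> Basis"
    have "(\<Sum>c\<in>Basis. p c *\<^sub>R c) \<bullet> b = (\<Sum>c\<in>Basis. p c * (if c = b then 1 else 0))"
      unfolding inner_sum_left using b by (intro sum.cong refl) (auto simp: inner_Basis)
    also have "\<dots> = p b" using b by (simp add: if_distrib cong: if_cong)
    finally show "F b ((\<Sum>c\<in>Basis. p c *\<^sub>R c) \<bullet> b) = F b (p b)" by simp
  qed
  also have "\<dots> = (\<Prod>b\<in>Basis. CLINT r|lborel. F b r)"
    by (rule P.product_integral_prod) (auto intro: Fint)
  also have "\<dots> = (\<Prod>b\<in>(Basis::'a set). complex_of_real (sqrt (pi / a) * exp (- (\<xi> \<bullet> b)\<^sup>2 / (4 * a))))"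
    unfolding F_def by (intro prod.cong refl gauss_ft_1d(2)[OF a])
  also have "\<dots> = complex_of_real ((pi / a) powr (real DIM('a) / 2) * exp (- (norm \<xi>)\<^sup>2 / (4 * a)))"
  proof -
    have "(\<Prod>b\<in>(Basis::'a set). sqrt (pi / a)) = (pi / a) powr (real DIM('a) / 2)"
    proof -
      have "(\<Prod>b\<in>(Basis::'a set). sqrt (pi / a)) = sqrt (pi / a) ^ DIM('a)" by simp
      also have "\<dots> = ((pi / a) powr (1/2)) powr real DIM('a)"
        using a by (simp add: powr_half_sqrt powr_realpow)
      also have "\<dots> = (pi / a) powr (real DIM('a) / 2)"
        by (simp add: powr_powr)
      finally show ?thesis .
    qed
    moreover have "(\<Prod>b\<in>(Basis::'a set). exp (- (\<xi> \<bullet> b)\<^sup>2 / (4 * a))) = exp (- (norm \<xi>)\<^sup>2 / (4 * a))"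
      by (simp add: norm2_euclid exp_sum[symmetric] sum_divide_distrib[symmetric] sum_negf)
    ultimately show ?thesis by (simp only: of_real_prod[symmetric] prod.distrib of_real_mult)
  qed
  finally show ?thesis .
qed



lemma gamma_scale_nn:
  fixes s l :: real assumes s: "s > 0" and l: "l > 0"
  shows "(\<integral>\<^sup>+u. ennreal (indicator {0<..} u * u powr (s - 1) * exp (- l * u)) \<partial>lborel) =
         ennreal (Gamma s / l powr s)"
proof -
  define f where "f v = ennreal (indicator {0..} v * v powr (s - 1) / exp v)" for v :: real
  have "ennreal (Gamma s) = (\<integral>\<^sup>+v. f v \<partial>lborel)"
    using Gamma_conv_nn_integral_real[OF s] by (simp add: f_def)
  also have "\<dots> = ennreal l * (\<integral>\<^sup>+u. f (0 + l * u) \<partial>lborel)"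
  proof -
    have fm: "f \<in> borel_measurable borel" unfolding f_def by measurable
    show ?thesis using l by (subst nn_integral_real_affine[OF fm, of l 0]) auto
  qed
  also have "(\<integral>\<^sup>+u. f (0 + l * u) \<partial>lborel) =
      (\<integral>\<^sup>+u. ennreal (l powr (s - 1)) * ennreal (indicator {0<..} u * u powr (s - 1) * exp (- l * u)) \<partial>lborel)"
  proof (intro nn_integral_cong)
    fix u :: real
    show "f (0 + l * u) = ennreal (l powr (s - 1)) * ennreal (indicator {0<..} u * u powr (s - 1) * exp (- l * u))"
    proof (cases "u > 0")
      case True
      then show ?thesis using l
        by (simp add: f_def ennreal_mult'[symmetric] powr_mult exp_minus field_simps)
    next
      case False
      then have "l * u \<le> 0" using l False by (simp add: mult_nonneg_nonpos less_imp_le)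
      then show ?thesis using False l
        by (cases "u = 0") (auto simp: f_def indicator_def)
    qed
  qed
  also have "\<dots> = ennreal (l powr (s - 1)) * (\<integral>\<^sup>+u. ennreal (indicator {0<..} u * u powr (s - 1) * exp (- l * u)) \<partial>lborel)"
    by (rule nn_integral_cmult) auto
  finally have *: "ennreal (Gamma s) = ennreal (l * l powr (s - 1)) * (\<integral>\<^sup>+u. ennreal (indicator {0<..} u * u powr (s - 1) * exp (- l * u)) \<partial>lborel)"
    using l by (simp add: ennreal_mult' mult.assoc)
  have ls: "l * l powr (s - 1) = l powr s" using l by (simp add: powr_diff)
  have pos: "l powr s > 0" using l by simp
  show ?thesis
  proof -
    have "ennreal (Gamma s / l powr s) = ennreal (Gamma s) / ennreal (l powr s)"
      using pos s by (simp add: divide_ennreal less_imp_le)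
    also have "\<dots> = (\<integral>\<^sup>+u. ennreal (indicator {0<..} u * u powr (s - 1) * exp (- l * u)) \<partial>lborel)"
      unfolding * ls using pos by (subst mult.commute, intro ennreal_mult_divide_eq) auto
    finally show ?thesis by simp
  qed
qed

lemma gamma_scale:
  fixes s l :: real assumes s: "s > 0" and l: "l > 0"
  shows "integrable lborel (\<lambda>u. indicator {0<..} u * u powr (s - 1) * exp (- l * u))"
    and "(LINT u|lborel. indicator {0<..} u * u powr (s - 1) * exp (- l * u)) = Gamma s / l powr s"
proof -
  have nn: "(\<integral>\<^sup>+u. ennreal (indicator {0<..} u * u powr (s - 1) * exp (- l * u)) \<partial>lborel) = ennreal (Gamma s / l powr s)"
    by (rule gamma_scale_nn[OF s l])
  show "integrable lborel (\<lambda>u. indicator {0<..} u * u powr (s - 1) * exp (- l * u))"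
  proof (rule integrableI_nonneg)
    show "(\<integral>\<^sup>+u. ennreal (indicator {0<..} u * u powr (s - 1) * exp (- l * u)) \<partial>lborel) < \<infinity>"
      unfolding nn by simp
  qed auto
  then show "(LINT u|lborel. indicator {0<..} u * u powr (s - 1) * exp (- l * u)) = Gamma s / l powr s"
    using nn s l by (subst (asm) nn_integral_eq_integral) auto
qed


lemma lborel_reflect: "distr lborel borel (\<lambda>x. v - x) = (lborel :: 'a::euclidean_space measure)"
proof -
  have "(lborel :: 'a measure) = density (distr lborel borel (\<lambda>x. v + (-1) *\<^sub>R x)) (\<lambda>_. \<bar>-1::real\<bar> ^ DIM('a))"
    by (rule lborel_affine) simp
  then show ?thesis by (simp add: density_1)
qed

lemma lborel_translate: "distr lborel borel (\<lambda>x. x + v) = (lborel :: 'a::euclidean_space measure)"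
proof -
  have "(\<lambda>x. x + v) = (+) v" by (auto simp: add.commute)
  then show ?thesis using lborel_distr_plus[of v] by simp
qed

lemma nn_integral_reflect:
  fixes f :: "'a::euclidean_space \<Rightarrow> ennreal"
  assumes [measurable]: "f \<in> borel_measurable borel"
  shows "(\<integral>\<^sup>+x. f (v - x) \<partial>lborel) = (\<integral>\<^sup>+x. f x \<partial>lborel)"
  by (subst (2) lborel_reflect[symmetric, of v]) (simp add: nn_integral_distr)

lemma nn_integral_translate:
  fixes f :: "'a::euclidean_space \<Rightarrow> ennreal"
  assumes [measurable]: "f \<in> borel_measurable borel"
  shows "(\<integral>\<^sup>+x. f (x + v) \<partial>lborel) = (\<integral>\<^sup>+x. f x \<partial>lborel)"
  by (subst (2) lborel_translate[symmetric, of v]) (simp add: nn_integral_distr)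

lemma integral_reflect:
  fixes f :: "'a::euclidean_space \<Rightarrow> 'b::{banach, second_countable_topology}"
  assumes [measurable]: "f \<in> borel_measurable borel"
  shows "(\<integral>x. f (v - x) \<partial>lborel) = (\<integral>x. f x \<partial>lborel)"
  by (subst (2) lborel_reflect[symmetric, of v]) (simp add: integral_distr)

lemma integral_translate:
  fixes f :: "'a::euclidean_space \<Rightarrow> 'b::{banach, second_countable_topology}"
  assumes [measurable]: "f \<in> borel_measurable borel"
  shows "(\<integral>x. f (x + v) \<partial>lborel) = (\<integral>x. f x \<partial>lborel)"
  by (subst (2) lborel_translate[symmetric, of v]) (simp add: integral_distr)

lemma AE_reflect:
  fixes P :: "'a::euclidean_space \<Rightarrow> bool"
  assumes "AE x in lborel. P x" and [measurable]: "Measurable.pred borel P"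
  shows "AE y in lborel. P (v - y)"
proof -
  have "AE x in distr lborel borel (\<lambda>x. v - x). P x" using assms(1) by (simp only: lborel_reflect)
  then show ?thesis by (subst (asm) AE_distr_iff) auto
qed

lemma gauss_nn_value:
  fixes a :: real assumes a: "a > 0"
  shows "(\<integral>\<^sup>+x. ennreal (exp (- a * (norm (x::'a::euclidean_space))\<^sup>2)) \<partial>lborel) =
         ennreal ((pi / a) powr (real DIM('a) / 2))"
proof -
  have "complex_of_real (LINT x|lborel. exp (- a * (norm (x::'a))\<^sup>2)) =
        (CLINT x|lborel. complex_of_real (exp (- a * (norm (x::'a))\<^sup>2)) * cis (x \<bullet> 0))"
    by simp
  also have "\<dots> = complex_of_real ((pi / a) powr (real DIM('a) / 2))"
    using gauss_ft[OF a, of "0::'a"] by simp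
  finally have "(LINT x|lborel. exp (- a * (norm (x::'a))\<^sup>2)) = (pi / a) powr (real DIM('a) / 2)"
    by (simp only: of_real_eq_iff)
  then show ?thesis
    using gauss_integrable[OF a, where 'a='a] by (subst nn_integral_eq_integral) auto
qed



lemma sq_sum_le: "((a::real) + b)\<^sup>2 \<le> 2 * a\<^sup>2 + 2 * b\<^sup>2"
proof -
  have "(a + b)\<^sup>2 + (a - b)\<^sup>2 = 2 * a\<^sup>2 + 2 * b\<^sup>2" by (simp add: power2_eq_square algebra_simps)
  moreover have "(a - b)\<^sup>2 \<ge> 0" by simp
  ultimately show ?thesis by linarith
qed

lemma shape_mixture:
  fixes t :: real and z :: "'a::euclidean_space" assumes t: "t > 0"
  defines "s \<equiv> (real DIM('a) + 1) / 2"
  shows "poisson_shape t z = t / Gamma s * (LINT u|lborel. indicator {0<..} u * u powr (s - 1) * exp (- (t\<^sup>2 + (norm z)\<^sup>2) * u))"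
    and "integrable lborel (\<lambda>u. indicator {0<..} u * u powr (s - 1) * exp (- (t\<^sup>2 + (norm z)\<^sup>2) * u))"
    and "ennreal (poisson_shape t z) = ennreal (t / Gamma s) * (\<integral>\<^sup>+u. ennreal (indicator {0<..} u * u powr (s - 1) * exp (- (t\<^sup>2 + (norm z)\<^sup>2) * u)) \<partial>lborel)"
proof -
  have s: "s > 0" by (simp add: s_def add_pos_nonneg)
  have L: "t\<^sup>2 + (norm z)\<^sup>2 > 0" using t by (simp add: add_pos_nonneg)
  note G = gamma_scale[OF s L]
  have gs: "Gamma s \<noteq> 0" using Gamma_real_pos[OF s] by linarith
  show "integrable lborel (\<lambda>u. indicator {0<..} u * u powr (s - 1) * exp (- (t\<^sup>2 + (norm z)\<^sup>2) * u))"
    by (rule G(1))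
  show "poisson_shape t z = t / Gamma s * (LINT u|lborel. indicator {0<..} u * u powr (s - 1) * exp (- (t\<^sup>2 + (norm z)\<^sup>2) * u))"
    unfolding G(2) poisson_shape_def s_def[symmetric] proof -
    have "Gamma s \<noteq> 0" using Gamma_real_pos[OF s] by simp
    then show "t / (t\<^sup>2 + (norm z)\<^sup>2) powr s = t / Gamma s * (Gamma s / (t\<^sup>2 + (norm z)\<^sup>2) powr s)"
      by simp
  qed
  show "ennreal (poisson_shape t z) = ennreal (t / Gamma s) * (\<integral>\<^sup>+u. ennreal (indicator {0<..} u * u powr (s - 1) * exp (- (t\<^sup>2 + (norm z)\<^sup>2) * u)) \<partial>lborel)"
    unfolding gamma_scale_nn[OF s L] poisson_shape_def s_def[symmetric] using s t gs
    by (simp add: ennreal_mult'[symmetric] field_simps)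
qed

lemma shape_nonneg: "t > 0 \<Longrightarrow> poisson_shape t z \<ge> 0"
  by (simp add: poisson_shape_def)

lemma shape_bound:
  fixes z :: "'a::euclidean_space" assumes t: "t > 0"
  shows "poisson_shape t z \<le> t / (t\<^sup>2) powr ((real DIM('a) + 1) / 2)"
  unfolding poisson_shape_def using t
  by (intro divide_left_mono powr_mono2 mult_pos_pos) (auto simp: add_pos_nonneg)

lemma shape_lower:
  fixes w y :: "'a::euclidean_space" assumes t: "t > 0" and y: "norm y \<le> t"
  shows "3 powr (- ((real DIM('a) + 1) / 2)) * poisson_shape t w \<le> poisson_shape t (w - y)"
proof -
  define s where "s = (real DIM('a) + 1) / 2"
  have s: "s > 0" by (simp add: s_def add_pos_nonneg)
  have "(norm (w - y))\<^sup>2 \<le> (norm w + norm y)\<^sup>2"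
    by (intro power_mono norm_triangle_ineq4) simp
  also have "\<dots> \<le> 2 * (norm w)\<^sup>2 + 2 * (norm y)\<^sup>2"
    by (rule sq_sum_le)
  finally have sq: "(norm (w - y))\<^sup>2 \<le> 2 * (norm w)\<^sup>2 + 2 * (norm y)\<^sup>2" .
  have "(norm y)\<^sup>2 \<le> t\<^sup>2" using y by (intro power_mono) auto
  then have "t\<^sup>2 + (norm (w - y))\<^sup>2 \<le> 3 * (t\<^sup>2 + (norm w)\<^sup>2)" using sq zero_le_power2[of "norm w"] by (simp only: distrib_left)
  then have "(t\<^sup>2 + (norm (w - y))\<^sup>2) powr s \<le> (3 * (t\<^sup>2 + (norm w)\<^sup>2)) powr s"
    using s by (intro powr_mono2) (auto simp: add_pos_nonneg)
  also have "\<dots> = 3 powr s * (t\<^sup>2 + (norm w)\<^sup>2) powr s"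
    by (rule powr_mult)
  finally have le: "(t\<^sup>2 + (norm (w - y))\<^sup>2) powr s \<le> 3 powr s * (t\<^sup>2 + (norm w)\<^sup>2) powr s" .
  have pos: "(t\<^sup>2 + (norm (w - y))\<^sup>2) powr s > 0" using t by (simp add: add_pos_nonneg)
  have "3 powr (- s) * (t / (t\<^sup>2 + (norm w)\<^sup>2) powr s) = t / (3 powr s * (t\<^sup>2 + (norm w)\<^sup>2) powr s)"
    by (simp add: powr_minus field_simps)
  also have "\<dots> \<le> t / (t\<^sup>2 + (norm (w - y))\<^sup>2) powr s"
    using le pos t by (intro divide_left_mono) auto
  finally show ?thesis unfolding poisson_shape_def s_def .
qed


lemma shape_measurable[measurable]: "poisson_shape t \<in> borel_measurable borel"
  unfolding poisson_shape_def[abs_def] by measurable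

lemma poisson_measurable[measurable]: "poisson t \<in> borel_measurable borel"
  unfolding poisson_def[abs_def] by measurable

lemma shape_nn_integral:
  fixes t :: real assumes t: "t > 0"
  shows "(\<integral>\<^sup>+z. ennreal (poisson_shape t (z::'a::euclidean_space)) \<partial>lborel) =
     ennreal (pi powr (real DIM('a) / 2) * Gamma (1/2) / Gamma ((real DIM('a) + 1) / 2))"
proof -
  define s where "s = (real DIM('a) + 1) / 2"
  define n where "n = real DIM('a)"
  have s: "s > 0" by (simp add: s_def add_pos_nonneg)
  have gs: "Gamma s > 0" using s by simp
  define m where "m u = indicator {0<..} u * u powr (s - 1) * exp (- (t\<^sup>2) * u)" for u :: real
  have m0: "m u \<ge> 0" for u by (simp add: m_def)
  have [measurable]: "m \<in> borel_measurable borel" unfolding m_def[abs_def] by measurable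
  have "(\<integral>\<^sup>+z. ennreal (poisson_shape t (z::'a)) \<partial>lborel) =
        (\<integral>\<^sup>+z. ennreal (t / Gamma s) * (\<integral>\<^sup>+u. ennreal (m u) * ennreal (exp (- u * (norm (z::'a))\<^sup>2)) \<partial>lborel) \<partial>lborel)"
  proof (intro nn_integral_cong)
    fix z :: 'a
    have "(\<lambda>u. ennreal (indicator {0<..} u * u powr (s - 1) * exp (- (t\<^sup>2 + (norm z)\<^sup>2) * u))) =
          (\<lambda>u. ennreal (m u) * ennreal (exp (- u * (norm z)\<^sup>2)))"
      by (auto simp: m_def ennreal_mult'[symmetric] exp_add[symmetric] algebra_simps)
    then show "ennreal (poisson_shape t z) = ennreal (t / Gamma s) * (\<integral>\<^sup>+u. ennreal (m u) * ennreal (exp (- u * (norm z)\<^sup>2)) \<partial>lborel)"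
      using shape_mixture(3)[OF t, of z] unfolding s_def by simp
  qed
  also have "\<dots> = ennreal (t / Gamma s) * (\<integral>\<^sup>+z. (\<integral>\<^sup>+u. ennreal (m u) * ennreal (exp (- u * (norm (z::'a))\<^sup>2)) \<partial>lborel) \<partial>lborel)"
    by (rule nn_integral_cmult) measurable
  also have "(\<integral>\<^sup>+z. (\<integral>\<^sup>+u. ennreal (m u) * ennreal (exp (- u * (norm (z::'a))\<^sup>2)) \<partial>lborel) \<partial>lborel) =
             (\<integral>\<^sup>+u. (\<integral>\<^sup>+z. ennreal (m u) * ennreal (exp (- u * (norm (z::'a))\<^sup>2)) \<partial>lborel) \<partial>lborel)"
    by (rule lborel_pair.Fubini'[symmetric]) measurable
  also have "\<dots> = (\<integral>\<^sup>+u. ennreal (m u) * (\<integral>\<^sup>+z. ennreal (exp (- u * (norm (z::'a))\<^sup>2)) \<partial>lborel) \<partial>lborel)"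
    by (intro nn_integral_cong nn_integral_cmult) measurable
  also have "\<dots> = (\<integral>\<^sup>+u. ennreal (pi powr (n / 2)) * ennreal (indicator {0<..} u * u powr (1/2 - 1) * exp (- (t\<^sup>2) * u)) \<partial>lborel)"
  proof (intro nn_integral_cong)
    fix u :: real
    show "ennreal (m u) * (\<integral>\<^sup>+z. ennreal (exp (- u * (norm (z::'a))\<^sup>2)) \<partial>lborel) =
          ennreal (pi powr (n / 2)) * ennreal (indicator {0<..} u * u powr (1/2 - 1) * exp (- (t\<^sup>2) * u))"
    proof (cases "u > 0")
      case True
      have e: "u powr (s - 1) * (pi / u) powr (n / 2) = pi powr (n / 2) * u powr (1/2 - 1)"
      proof -
        have "u powr (s - 1) * (pi / u) powr (n / 2) = pi powr (n / 2) * (u powr (s - 1) / u powr (n / 2))"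
          by (simp add: powr_divide)
        also have "u powr (s - 1) / u powr (n / 2) = u powr (s - 1 - n / 2)"
          by (simp add: powr_diff)
        also have "s - 1 - n / 2 = 1/2 - 1" by (simp add: s_def n_def field_simps)
        finally show ?thesis .
      qed
      have g: "(\<integral>\<^sup>+z. ennreal (exp (- u * (norm (z::'a))\<^sup>2)) \<partial>lborel) = ennreal ((pi / u) powr (n / 2))"
        unfolding n_def by (rule gauss_nn_value[OF True])
      have "m u * (pi / u) powr (n / 2) = (u powr (s - 1) * (pi / u) powr (n / 2)) * exp (- (t\<^sup>2) * u)"
        using True by (simp add: m_def mult_ac)
      also have "\<dots> = pi powr (n / 2) * (indicator {0<..} u * u powr (1/2 - 1) * exp (- (t\<^sup>2) * u))"
        using True by (simp only: e) simp
      finally have mm: "m u * (pi / u) powr (n / 2) = pi powr (n / 2) * (indicator {0<..} u * u powr (1/2 - 1) * exp (- (t\<^sup>2) * u))" .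
      have "ennreal (m u) * ennreal ((pi / u) powr (n / 2)) = ennreal (m u * (pi / u) powr (n / 2))"
        by (rule ennreal_mult'[symmetric]) (rule m0)
      also have "\<dots> = ennreal (pi powr (n / 2)) * ennreal (indicator {0<..} u * u powr (1/2 - 1) * exp (- (t\<^sup>2) * u))"
        unfolding mm by (rule ennreal_mult') simp
      finally show ?thesis unfolding g .
    next
      case False
      then show ?thesis by (simp add: m_def)
    qed
  qed
  also have "\<dots> = ennreal (pi powr (n / 2)) * ennreal (Gamma (1/2) / (t\<^sup>2) powr (1/2))"
  proof -
    have gg: "(\<integral>\<^sup>+u. ennreal (indicator {0<..} u * u powr (1/2 - 1) * exp (- (t\<^sup>2) * u)) \<partial>lborel) = ennreal (Gamma (1/2) / (t\<^sup>2) powr (1/2))"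
      by (rule gamma_scale_nn) (use t in auto)
    show ?thesis by (subst nn_integral_cmult, measurable, subst gg, rule refl)
  qed
  also have "(t\<^sup>2) powr (1/2) = t" using t by (simp add: powr_half_sqrt)
  finally show ?thesis
    using t gs by (simp add: s_def n_def ennreal_mult'[symmetric] field_simps)
qed



lemma integrable_pair_bound:
  fixes F :: "'a::euclidean_space \<times> 'b::euclidean_space \<Rightarrow> 'c::{banach, second_countable_topology}"
    and f :: "'a \<Rightarrow> real" and g :: "'b \<Rightarrow> real"
  assumes [measurable]: "F \<in> borel_measurable (lborel \<Otimes>\<^sub>M lborel)"
    and f: "integrable lborel f" and g: "integrable lborel g"
    and f0: "\<And>x. f x \<ge> 0" and g0: "\<And>y. g y \<ge> 0"
    and le: "\<And>x y. norm (F (x, y)) \<le> f x * g y"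
  shows "integrable (lborel \<Otimes>\<^sub>M lborel) F"
proof -
  have [measurable]: "f \<in> borel_measurable borel" "g \<in> borel_measurable borel"
    using f g by auto
  have "(\<integral>\<^sup>+p. ennreal (norm (F p)) \<partial>(lborel \<Otimes>\<^sub>M lborel)) \<le> (\<integral>\<^sup>+p. ennreal (f (fst p) * g (snd p)) \<partial>(lborel \<Otimes>\<^sub>M lborel))"
    by (intro nn_integral_mono) (auto intro!: ennreal_leI simp: le)
  also have "\<dots> = (\<integral>\<^sup>+x. \<integral>\<^sup>+y. ennreal (f x) * ennreal (g y) \<partial>lborel \<partial>lborel)"
  proof -
    have "(\<integral>\<^sup>+x. \<integral>\<^sup>+y. ennreal (f (fst (x, y)) * g (snd (x, y))) \<partial>lborel \<partial>lborel) =
          (\<integral>\<^sup>+p. ennreal (f (fst p) * g (snd p)) \<partial>(lborel \<Otimes>\<^sub>M lborel))"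
      by (rule lborel.nn_integral_fst) measurable
    then show ?thesis by (simp add: ennreal_mult f0 g0)
  qed
  also have "\<dots> = (\<integral>\<^sup>+x. ennreal (f x) * (\<integral>\<^sup>+y. ennreal (g y) \<partial>lborel) \<partial>lborel)"
    by (intro nn_integral_cong nn_integral_cmult) auto
  also have "\<dots> = (\<integral>\<^sup>+x. ennreal (f x) \<partial>lborel) * (\<integral>\<^sup>+y. ennreal (g y) \<partial>lborel)"
    by (rule nn_integral_multc) auto
  also have "\<dots> < \<infinity>"
    using f g by (auto simp: integrable_iff_bounded f0 g0 ennreal_mult_less_top)
  finally show ?thesis by (intro integrableI_bounded) auto
qed

lemma fourier_zero_gauss:
  fixes D :: "'a::euclidean_space \<Rightarrow> real"
  assumes D: "integrable lborel D" and F: "\<And>\<xi>. fourier D \<xi> = 0" and u: "u > 0"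
  shows "(LINT y|lborel. D y * exp (- u * (norm (x - y))\<^sup>2)) = 0"
proof -
  have [measurable]: "D \<in> borel_measurable borel" using D by auto
  define a where "a = 1 / (4 * u)"
  have a: "a > 0" using u by (simp add: a_def)
  define \<kappa> where "\<kappa> = (pi / a) powr (real DIM('a) / 2)"
  have \<kappa>: "\<kappa> > 0" using a by (simp add: \<kappa>_def)
  define E where "E \<xi> = exp (- a * (norm (\<xi>::'a))\<^sup>2)" for \<xi>
  have [measurable]: "E \<in> borel_measurable borel" unfolding E_def[abs_def] by measurable
  have gw: "complex_of_real (exp (- u * (norm w)\<^sup>2)) =
            complex_of_real (1 / \<kappa>) * (CLINT \<xi>|lborel. complex_of_real (E \<xi>) * cis (\<xi> \<bullet> w))" for w :: 'a
  proof -
    have "(CLINT \<xi>|lborel. complex_of_real (E \<xi>) * cis (\<xi> \<bullet> w)) = complex_of_real (\<kappa> * exp (- (norm w)\<^sup>2 / (4 * a)))"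
      unfolding E_def \<kappa>_def by (rule gauss_ft[OF a])
    also have "- (norm w)\<^sup>2 / (4 * a) = - u * (norm w)\<^sup>2" using u by (simp add: a_def)
    finally show ?thesis using \<kappa> by simp
  qed
  define \<Phi> where "\<Phi> y \<xi> = complex_of_real (D y) * (complex_of_real (E \<xi>) * cis (\<xi> \<bullet> x) * cis (- (y \<bullet> \<xi>)))" for y \<xi> :: 'a
  have int: "integrable (lborel \<Otimes>\<^sub>M lborel) (\<lambda>(\<xi>, y). \<Phi> y \<xi>)"
  proof (rule integrable_pair_bound[where f = E and g = "\<lambda>y. \<bar>D y\<bar>"])
    show "integrable lborel E" unfolding E_def by (rule gauss_integrable[OF a])
  qed (auto simp: \<Phi>_def E_def norm_mult D)
  have "complex_of_real (LINT y|lborel. D y * exp (- u * (norm (x - y))\<^sup>2)) =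
        (CLINT y|lborel. complex_of_real (D y) * complex_of_real (exp (- u * (norm (x - y))\<^sup>2)))"
    by (subst integral_complex_of_real[symmetric]) simp
  also have "\<dots> = (CLINT y|lborel. complex_of_real (1 / \<kappa>) * (CLINT \<xi>|lborel. \<Phi> y \<xi>))"
  proof (intro Bochner_Integration.integral_cong refl)
    fix y :: 'a
    have "complex_of_real (D y) * complex_of_real (exp (- u * (norm (x - y))\<^sup>2)) =
          complex_of_real (1 / \<kappa>) * (complex_of_real (D y) * (CLINT \<xi>|lborel. complex_of_real (E \<xi>) * cis (\<xi> \<bullet> (x - y))))"
      unfolding gw by (simp add: mult_ac)
    also have "complex_of_real (D y) * (CLINT \<xi>|lborel. complex_of_real (E \<xi>) * cis (\<xi> \<bullet> (x - y))) =
               (CLINT \<xi>|lborel. complex_of_real (D y) * (complex_of_real (E \<xi>) * cis (\<xi> \<bullet> (x - y))))"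
      by (rule integral_mult_right_zero[symmetric])
    also have "\<dots> = (CLINT \<xi>|lborel. \<Phi> y \<xi>)"
    proof (intro Bochner_Integration.integral_cong refl)
      fix \<xi> :: 'a
      have "cis (\<xi> \<bullet> (x - y)) = cis (\<xi> \<bullet> x) * cis (- (y \<bullet> \<xi>))"
        by (simp add: cis_mult inner_diff_right inner_commute)
      then show "complex_of_real (D y) * (complex_of_real (E \<xi>) * cis (\<xi> \<bullet> (x - y))) = \<Phi> y \<xi>"
        by (simp add: \<Phi>_def mult_ac)
    qed
    finally show "complex_of_real (D y) * complex_of_real (exp (- u * (norm (x - y))\<^sup>2)) =
          complex_of_real (1 / \<kappa>) * (CLINT \<xi>|lborel. \<Phi> y \<xi>)" .
  qed
  also have "\<dots> = complex_of_real (1 / \<kappa>) * (CLINT y|lborel. (CLINT \<xi>|lborel. \<Phi> y \<xi>))"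
    by (rule integral_mult_right_zero)
  also have "(CLINT y|lborel. (CLINT \<xi>|lborel. \<Phi> y \<xi>)) = (CLINT \<xi>|lborel. (CLINT y|lborel. \<Phi> y \<xi>))"
    using lborel_pair.Fubini_integral[OF int] by simp
  also have "\<dots> = (CLINT \<xi>|(lborel::'a measure). 0)"
  proof (intro Bochner_Integration.integral_cong refl)
    fix \<xi> :: 'a
    have "(CLINT y|lborel. \<Phi> y \<xi>) = (complex_of_real (E \<xi>) * cis (\<xi> \<bullet> x)) *
            (CLINT y|lborel. complex_of_real (D y) * cis (- 2 * pi * (y \<bullet> ((1 / (2 * pi)) *\<^sub>R \<xi>))))"
      by (subst integral_mult_right_zero[symmetric]) (simp add: \<Phi>_def mult_ac)
    also have "(CLINT y|lborel. complex_of_real (D y) * cis (- 2 * pi * (y \<bullet> ((1 / (2 * pi)) *\<^sub>R \<xi>)))) = 0"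
      using F[of "(1 / (2 * pi)) *\<^sub>R \<xi>"] by (simp add: fourier_def)
    finally show "(CLINT y|lborel. \<Phi> y \<xi>) = 0" by simp
  qed
  finally show ?thesis by simp
qed


lemma integrable_mult_bdd:
  fixes G h :: "'a::euclidean_space \<Rightarrow> real"
  assumes G: "integrable lborel G" and [measurable]: "h \<in> borel_measurable borel"
    and B: "\<And>y. \<bar>h y\<bar> \<le> B"
  shows "integrable lborel (\<lambda>y. G y * h y)"
proof (rule Bochner_Integration.integrable_bound)
  show "integrable lborel (\<lambda>y. B * G y)" using G by simp
  show "(\<lambda>y. G y * h y) \<in> borel_measurable lborel" using G by measurable
  show "AE y in lborel. norm (G y * h y) \<le> norm (B * G y)"
  proof (intro AE_I2)
    fix y
    have "\<bar>G y\<bar> * \<bar>h y\<bar> \<le> \<bar>G y\<bar> * \<bar>B\<bar>"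
      using B[of y] by (intro mult_left_mono) auto
    then show "norm (G y * h y) \<le> norm (B * G y)" by (simp add: abs_mult mult.commute)
  qed
qed

lemma fourier_integrand_integrable:
  fixes G :: "'a::euclidean_space \<Rightarrow> real"
  assumes G: "integrable lborel G"
  shows "integrable lborel (\<lambda>y. complex_of_real (G y) * cis (- 2 * pi * (y \<bullet> \<xi>)))"
proof (rule Bochner_Integration.integrable_bound)
  show "integrable lborel (\<lambda>y. complex_of_real (G y))" using G by simp
  show "(\<lambda>y. complex_of_real (G y) * cis (- 2 * pi * (y \<bullet> \<xi>))) \<in> borel_measurable lborel" using G by measurable
qed (simp add: norm_mult)

lemma fourier_zero_shape:
  fixes D :: "'a::euclidean_space \<Rightarrow> real"
  assumes D: "integrable lborel D" and F: "\<And>\<xi>. fourier D \<xi> = 0" and t: "t > 0"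
  shows "(LINT y|lborel. D y * poisson_shape t (x - y)) = 0"
proof -
  have [measurable]: "D \<in> borel_measurable borel" using D by auto
  define s where "s = (real DIM('a) + 1) / 2"
  have s: "s > 0" by (simp add: s_def add_pos_nonneg)
  define m where "m u = indicator {0<..} u * u powr (s - 1) * exp (- (t\<^sup>2) * u)" for u :: real
  have m0: "m u \<ge> 0" for u by (simp add: m_def)
  have [measurable]: "m \<in> borel_measurable borel" unfolding m_def[abs_def] by measurable
  have mint: "integrable lborel m" unfolding m_def[abs_def] by (rule gamma_scale(1)[OF s]) (use t in simp)
  define \<Psi> where "\<Psi> y u = D y * (m u * exp (- u * (norm (x - y))\<^sup>2))" for y :: 'a and u :: real
  have shp: "poisson_shape t z = t / Gamma s * (LINT u|lborel. m u * exp (- u * (norm z)\<^sup>2))" for z :: 'a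
  proof -
    have "(\<lambda>u. indicator {0<..} u * u powr (s - 1) * exp (- (t\<^sup>2 + (norm z)\<^sup>2) * u)) =
          (\<lambda>u. m u * exp (- u * (norm z)\<^sup>2))"
    proof
      fix u :: real
      have "- (t\<^sup>2 + (norm z)\<^sup>2) * u = - (t\<^sup>2) * u + - u * (norm z)\<^sup>2" by (simp add: algebra_simps)
      then have "exp (- (t\<^sup>2 + (norm z)\<^sup>2) * u) = exp (- (t\<^sup>2) * u) * exp (- u * (norm z)\<^sup>2)"
        by (simp only: exp_add)
      then show "indicator {0<..} u * u powr (s - 1) * exp (- (t\<^sup>2 + (norm z)\<^sup>2) * u) = m u * exp (- u * (norm z)\<^sup>2)"
        by (simp only: m_def mult.assoc)
    qed
    then show ?thesis using shape_mixture(1)[OF t, of z] unfolding s_def by simp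
  qed
  have bnd: "norm (\<Psi> y u) \<le> m u * \<bar>D y\<bar>" for u :: real and y :: 'a
  proof -
    have me: "m u * exp (- u * (norm (x - y))\<^sup>2) \<le> m u * 1"
    proof (cases "u > 0")
      case True
      then show ?thesis by (intro mult_left_mono m0) (simp add: mult_nonneg_nonneg)
    next
      case False then show ?thesis by (simp add: m_def)
    qed
    have "\<bar>D y\<bar> * (m u * exp (- u * (norm (x - y))\<^sup>2)) \<le> \<bar>D y\<bar> * (m u * 1)"
      by (rule mult_left_mono[OF me]) simp
    then show ?thesis
      using m0[of u] by (simp add: \<Psi>_def abs_mult mult_ac)
  qed
  have meas: "(\<lambda>(u::real, y::'a). \<Psi> y u) \<in> borel_measurable (lborel \<Otimes>\<^sub>M lborel)" unfolding \<Psi>_def by measurable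
  have int: "integrable (lborel \<Otimes>\<^sub>M lborel) (\<lambda>(u::real, y::'a). \<Psi> y u)"
    by (rule integrable_pair_bound[where f = m and g = "\<lambda>y. \<bar>D y\<bar>", OF meas]) (auto simp: mint D m0 bnd[simplified])
  have "(LINT y|lborel. D y * poisson_shape t (x - y)) = (LINT y|lborel. t / Gamma s * (LINT u|lborel. \<Psi> y u))"
  proof (intro Bochner_Integration.integral_cong refl)
    fix y :: 'a
    have "D y * (LINT u|lborel. m u * exp (- u * (norm (x - y))\<^sup>2)) = (LINT u|lborel. \<Psi> y u)"
      unfolding \<Psi>_def by (rule integral_mult_right_zero[symmetric])
    then show "D y * poisson_shape t (x - y) = t / Gamma s * (LINT u|lborel. \<Psi> y u)"
      unfolding shp by (simp only: mult.left_commute[of "D y"])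
  qed
  also have "\<dots> = t / Gamma s * (LINT y|lborel. (LINT u|lborel. \<Psi> y u))"
    by (rule integral_mult_right_zero)
  also have "(LINT y|lborel. (LINT u|lborel. \<Psi> y u)) = (LINT u|lborel. (LINT y|lborel. \<Psi> y u))"
    using lborel_pair.Fubini_integral[OF int] by simp
  also have "\<dots> = (LINT u|(lborel::real measure). 0)"
  proof (intro Bochner_Integration.integral_cong refl)
    fix u :: real
    show "(LINT y|lborel. \<Psi> y u) = 0"
    proof (cases "u > 0")
      case True
      have "(LINT y|lborel. \<Psi> y u) = (LINT y|lborel. m u * (D y * exp (- u * (norm (x - y))\<^sup>2)))"
        unfolding \<Psi>_def by (simp only: mult.left_commute[of "D _"])
      also have "\<dots> = m u * (LINT y|lborel. D y * exp (- u * (norm (x - y))\<^sup>2))"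
        by (rule integral_mult_right_zero)
      also have "\<dots> = 0" using fourier_zero_gauss[OF D F True] by simp
      finally show ?thesis .
    next
      case False then show ?thesis by (simp add: \<Psi>_def m_def)
    qed
  qed
  finally show ?thesis by simp
qed

lemma conv_poisson_eq:
  fixes G H :: "'a::euclidean_space \<Rightarrow> real"
  assumes G: "integrable lborel G" and H: "integrable lborel H"
    and F: "\<And>\<xi>. fourier G \<xi> = fourier H \<xi>" and t: "t > 0"
  shows "conv G (poisson t) x = conv H (poisson t) x"
proof -
  have [measurable]: "G \<in> borel_measurable borel" "H \<in> borel_measurable borel" using G H by auto
  define D where "D y = G y - H y" for y
  have D: "integrable lborel D" unfolding D_def[abs_def] using G H by simp
  have FD: "fourier D \<xi> = 0" for \<xi>
  proof -
    have "fourier D \<xi> = (CLINT y|lborel. complex_of_real (G y) * cis (- 2 * pi * (y \<bullet> \<xi>)) -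
                                       complex_of_real (H y) * cis (- 2 * pi * (y \<bullet> \<xi>)))"
      unfolding fourier_def D_def by (simp add: algebra_simps)
    also have "\<dots> = fourier G \<xi> - fourier H \<xi>"
      unfolding fourier_def
      by (rule Bochner_Integration.integral_diff[OF fourier_integrand_integrable[OF G] fourier_integrand_integrable[OF H]])
    finally show ?thesis using F by simp
  qed
  define c where "c = poisson_const TYPE('a)"
  define B where "B = \<bar>c\<bar> * (t / (t\<^sup>2) powr ((real DIM('a) + 1) / 2))"
  have PB: "\<bar>poisson t (x - y)\<bar> \<le> B" for y
  proof -
    have "\<bar>poisson t (x - y)\<bar> = \<bar>c\<bar> * poisson_shape t (x - y)"
      using shape_nonneg[OF t, of "x - y"] by (simp add: poisson_def c_def abs_mult)
    also have "\<dots> \<le> B" unfolding B_def by (intro mult_left_mono shape_bound t) simp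
    finally show ?thesis .
  qed
  have iG: "integrable lborel (\<lambda>y. G y * poisson t (x - y))"
    by (rule integrable_mult_bdd[OF G _ PB]) measurable
  have iH: "integrable lborel (\<lambda>y. H y * poisson t (x - y))"
    by (rule integrable_mult_bdd[OF H _ PB]) measurable
  have "conv G (poisson t) x - conv H (poisson t) x = (LINT y|lborel. G y * poisson t (x - y) - H y * poisson t (x - y))"
    unfolding conv_def using iG iH by simp
  also have "\<dots> = (LINT y|lborel. c * (D y * poisson_shape t (x - y)))"
    by (intro Bochner_Integration.integral_cong refl) (simp add: D_def poisson_def c_def algebra_simps)
  also have "\<dots> = c * (LINT y|lborel. D y * poisson_shape t (x - y))"
    by (rule integral_mult_right_zero)
  also have "\<dots> = 0" using fourier_zero_shape[OF D FD t] by simp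
  finally show ?thesis by simp
qed



definition kf :: "real \<Rightarrow> real \<Rightarrow> 'a::euclidean_space \<Rightarrow> real" where
  "kf \<alpha> u y = indicator {0<..} u * (u powr (\<alpha> / 2 - 1) * exp (- u) *
      ((4 * pi * u) powr (- real DIM('a) / 2) * exp (- (1 / (4 * u)) * (norm y)\<^sup>2))) / Gamma (\<alpha> / 2)"

definition bk :: "real \<Rightarrow> 'a::euclidean_space \<Rightarrow> real" where
  "bk \<alpha> y = (LINT u|lborel. kf \<alpha> u y)"

lemma kf_nonneg: "\<alpha> > 0 \<Longrightarrow> kf \<alpha> u y \<ge> 0"
  unfolding kf_def by (auto intro!: divide_nonneg_pos mult_nonneg_nonneg simp: indicator_def)

lemma kf_measurable[measurable]: "(\<lambda>(u, y). kf \<alpha> u y) \<in> borel_measurable (lborel \<Otimes>\<^sub>M lborel)"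
  unfolding kf_def by measurable

lemma bk_measurable[measurable]: "bk \<alpha> \<in> borel_measurable borel"
proof -
  have "(\<lambda>y. LINT u|lborel. kf \<alpha> u (y::'a)) \<in> borel_measurable lborel"
  proof (rule lborel.borel_measurable_lebesgue_integral)
    have "(\<lambda>(y::'a, u::real). kf \<alpha> u y) \<in> borel_measurable (lborel \<Otimes>\<^sub>M lborel)"
      unfolding kf_def by measurable
    then show "(\<lambda>(y::'a, u::real). kf \<alpha> u y) \<in> borel_measurable (lborel \<Otimes>\<^sub>M lborel)" .
  qed
  then show ?thesis unfolding bk_def[abs_def] by simp
qed

lemma kf_y_integral:
  assumes a: "\<alpha> > 0"
  shows "(\<integral>\<^sup>+y. ennreal (kf \<alpha> u (y::'a::euclidean_space)) \<partial>lborel) =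
         ennreal (indicator {0<..} u * u powr (\<alpha> / 2 - 1) * exp (- 1 * u) / Gamma (\<alpha> / 2))"
proof (cases "u > 0")
  case False
  then show ?thesis by (simp add: kf_def)
next
  case True
  define n where "n = real DIM('a)"
  define c where "c = u powr (\<alpha> / 2 - 1) * exp (- u) * (4 * pi * u) powr (- n / 2) / Gamma (\<alpha> / 2)"
  have c: "c \<ge> 0" using a by (simp add: c_def)
  have b: "1 / (4 * u) > 0" using True by simp
  have "(\<integral>\<^sup>+y. ennreal (kf \<alpha> u (y::'a)) \<partial>lborel) =
        (\<integral>\<^sup>+y. ennreal c * ennreal (exp (- (1 / (4 * u)) * (norm (y::'a))\<^sup>2)) \<partial>lborel)"
  proof (intro nn_integral_cong)
    fix y :: 'a
    have "kf \<alpha> u y = c * exp (- (1 / (4 * u)) * (norm y)\<^sup>2)"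
      using True by (simp add: kf_def c_def n_def)
    then show "ennreal (kf \<alpha> u y) = ennreal c * ennreal (exp (- (1 / (4 * u)) * (norm y)\<^sup>2))"
      using c by (simp add: ennreal_mult)
  qed
  also have "\<dots> = ennreal c * (\<integral>\<^sup>+y. ennreal (exp (- (1 / (4 * u)) * (norm (y::'a))\<^sup>2)) \<partial>lborel)"
    by (rule nn_integral_cmult) measurable
  also have "\<dots> = ennreal c * ennreal ((pi / (1 / (4 * u))) powr (n / 2))"
    unfolding n_def by (subst gauss_nn_value[OF b]) (rule refl)
  also have "\<dots> = ennreal (c * (4 * pi * u) powr (n / 2))"
    using c by (simp add: ennreal_mult mult_ac)
  also have "c * (4 * pi * u) powr (n / 2) = u powr (\<alpha> / 2 - 1) * exp (- u) / Gamma (\<alpha> / 2)"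
  proof -
    have "(4 * pi * u) powr (- n / 2) * (4 * pi * u) powr (n / 2) = 1"
      using True by (simp add: powr_add[symmetric])
    then show ?thesis unfolding c_def by (simp add: field_simps)
  qed
  finally show ?thesis using True by simp
qed

lemma kf_total:
  assumes a: "\<alpha> > 0"
  shows "(\<integral>\<^sup>+u. \<integral>\<^sup>+y. ennreal (kf \<alpha> u (y::'a::euclidean_space)) \<partial>lborel \<partial>lborel) = 1"
proof -
  have a2: "\<alpha> / 2 > 0" using a by simp
  have "(\<integral>\<^sup>+u. \<integral>\<^sup>+y. ennreal (kf \<alpha> u (y::'a)) \<partial>lborel \<partial>lborel) =
        (\<integral>\<^sup>+u. ennreal (1 / Gamma (\<alpha> / 2)) * ennreal (indicator {0<..} u * u powr (\<alpha> / 2 - 1) * exp (- 1 * u)) \<partial>lborel)"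
  proof (intro nn_integral_cong)
    fix u :: real
    have "indicator {0<..} u * u powr (\<alpha> / 2 - 1) * exp (- 1 * u) / Gamma (\<alpha> / 2) =
          (1 / Gamma (\<alpha> / 2)) * (indicator {0<..} u * u powr (\<alpha> / 2 - 1) * exp (- 1 * u))" by simp
    then show "(\<integral>\<^sup>+y. ennreal (kf \<alpha> u (y::'a)) \<partial>lborel) =
        ennreal (1 / Gamma (\<alpha> / 2)) * ennreal (indicator {0<..} u * u powr (\<alpha> / 2 - 1) * exp (- 1 * u))"
    proof -
      have g0: "1 / Gamma (\<alpha> / 2) \<ge> 0" using a2 by (simp add: less_imp_le)
      show ?thesis unfolding kf_y_integral[OF a] ennreal_mult'[OF g0, symmetric] \<open>_ = (1 / Gamma (\<alpha> / 2)) * _\<close> ..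
    qed
  qed
  also have "\<dots> = ennreal (1 / Gamma (\<alpha> / 2)) * ennreal (Gamma (\<alpha> / 2) / 1 powr (\<alpha> / 2))"
    by (subst nn_integral_cmult) (measurable, subst gamma_scale_nn[OF a2], simp_all)
  also have "\<dots> = 1"
  proof -
    have gp: "Gamma (\<alpha> / 2) > 0" using a2 by simp
    have "ennreal (1 / Gamma (\<alpha> / 2)) * ennreal (Gamma (\<alpha> / 2) / 1 powr (\<alpha> / 2)) =
          ennreal (1 / Gamma (\<alpha> / 2) * (Gamma (\<alpha> / 2) / 1 powr (\<alpha> / 2)))"
      using gp by (intro ennreal_mult'[symmetric]) simp
    also have "1 / Gamma (\<alpha> / 2) * (Gamma (\<alpha> / 2) / 1 powr (\<alpha> / 2)) = 1" using gp by simp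
    finally show ?thesis by simp
  qed
  finally show ?thesis .
qed


lemma bk_nonneg: "\<alpha> > 0 \<Longrightarrow> bk \<alpha> y \<ge> 0"
  unfolding bk_def by (intro integral_nonneg_AE) (auto simp: kf_nonneg)

lemma bk_ennreal: "\<alpha> > 0 \<Longrightarrow> ennreal (bk \<alpha> y) = (if (\<integral>\<^sup>+u. ennreal (kf \<alpha> u y) \<partial>lborel) = top then 0 else (\<integral>\<^sup>+u. ennreal (kf \<alpha> u y) \<partial>lborel))"
proof -
  assume a: "\<alpha> > 0"
  have "bk \<alpha> y = enn2real (\<integral>\<^sup>+u. ennreal (kf \<alpha> u y) \<partial>lborel)"
    unfolding bk_def
  proof (rule integral_eq_nn_integral)
    show "AE u in lborel. 0 \<le> kf \<alpha> u y" by (intro AE_I2 kf_nonneg[OF a])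
  qed (simp add: kf_def)
  then show ?thesis by (simp add: ennreal_enn2real_if)
qed

lemma kf_total_swap:
  assumes a: "\<alpha> > 0"
  shows "(\<integral>\<^sup>+y. \<integral>\<^sup>+u. ennreal (kf \<alpha> u (y::'a::euclidean_space)) \<partial>lborel \<partial>lborel) = 1"
proof -
  have "(\<integral>\<^sup>+y. \<integral>\<^sup>+u. ennreal (kf \<alpha> u (y::'a)) \<partial>lborel \<partial>lborel) =
        (\<integral>\<^sup>+u. \<integral>\<^sup>+y. ennreal (kf \<alpha> u (y::'a)) \<partial>lborel \<partial>lborel)"
    by (rule lborel_pair.Fubini') measurable
  then show ?thesis using kf_total[OF a] by simp
qed

lemma bk_AE:
  assumes a: "\<alpha> > 0"
  shows "AE y in lborel. ennreal (bk \<alpha> (y::'a::euclidean_space)) = (\<integral>\<^sup>+u. ennreal (kf \<alpha> u y) \<partial>lborel)"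
proof -
  have m: "(\<lambda>y. \<integral>\<^sup>+u. ennreal (kf \<alpha> u (y::'a)) \<partial>lborel) \<in> borel_measurable lborel"
    by measurable
  have "AE y in lborel. (\<integral>\<^sup>+u. ennreal (kf \<alpha> u (y::'a)) \<partial>lborel) \<noteq> \<infinity>"
    by (rule nn_integral_PInf_AE[OF m]) (simp add: kf_total_swap[OF a])
  then show ?thesis by eventually_elim (simp add: bk_ennreal[OF a])
qed

lemma bk_integrable:
  assumes a: "\<alpha> > 0"
  shows "integrable lborel (bk \<alpha> :: 'a::euclidean_space \<Rightarrow> real)"
proof (rule integrableI_nonneg)
  have "(\<integral>\<^sup>+y. ennreal (bk \<alpha> (y::'a)) \<partial>lborel) = (\<integral>\<^sup>+y. \<integral>\<^sup>+u. ennreal (kf \<alpha> u (y::'a)) \<partial>lborel \<partial>lborel)"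
    by (rule nn_integral_cong_AE[OF bk_AE[OF a]])
  then show "(\<integral>\<^sup>+y. ennreal (bk \<alpha> (y::'a)) \<partial>lborel) < \<infinity>" by (simp add: kf_total_swap[OF a])
qed (auto simp: bk_nonneg[OF a])


lemma aux1: "(a::real) * b * 1 / g = 1 / g * (1 * a * b)" by simp
lemma aux2: "(g::real) \<noteq> 0 \<Longrightarrow> 1 / g * (g / x) = 1 / x" by simp

lemma bk_fourier:
  assumes a: "\<alpha> > 0"
  shows "fourier (bk \<alpha> :: 'a::euclidean_space \<Rightarrow> real) \<xi> =
         complex_of_real ((1 + 4 * pi\<^sup>2 * (norm \<xi>)\<^sup>2) powr (- \<alpha> / 2))"
proof -
  have a2: "\<alpha> / 2 > 0" using a by simp
  have gp: "Gamma (\<alpha> / 2) > 0" using a2 by simp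
  define n where "n = real DIM('a)"
  define \<Phi> where "\<Phi> u y = complex_of_real (kf \<alpha> u y) * cis (- 2 * pi * (y \<bullet> \<xi>))" for u :: real and y :: 'a
  define L where "L = 1 + 4 * pi\<^sup>2 * (norm \<xi>)\<^sup>2"
  have L: "L > 0" unfolding L_def by (simp add: add_pos_nonneg)
  have meas: "(\<lambda>(u::real, y::'a). \<Phi> u y) \<in> borel_measurable (lborel \<Otimes>\<^sub>M lborel)"
    unfolding \<Phi>_def kf_def by measurable
  have int: "integrable (lborel \<Otimes>\<^sub>M lborel) (\<lambda>(u::real, y::'a). \<Phi> u y)"
  proof (rule integrableI_bounded[OF meas])
    have "(\<integral>\<^sup>+p. ennreal (norm ((\<lambda>(u::real, y::'a). \<Phi> u y) p)) \<partial>(lborel \<Otimes>\<^sub>M lborel)) =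
          (\<integral>\<^sup>+p. ennreal (kf \<alpha> (fst p) (snd p :: 'a)) \<partial>(lborel \<Otimes>\<^sub>M lborel))"
      by (intro nn_integral_cong) (auto simp: \<Phi>_def norm_mult kf_nonneg[OF a])
    also have "\<dots> = (\<integral>\<^sup>+u. \<integral>\<^sup>+y. ennreal (kf \<alpha> u (y::'a)) \<partial>lborel \<partial>lborel)"
    proof -
      have "(\<integral>\<^sup>+u. \<integral>\<^sup>+y. ennreal (kf \<alpha> (fst (u, y)) (snd (u, y) :: 'a)) \<partial>lborel \<partial>lborel) =
            (\<integral>\<^sup>+p. ennreal (kf \<alpha> (fst p) (snd p :: 'a)) \<partial>(lborel \<Otimes>\<^sub>M lborel))"
        by (rule lborel.nn_integral_fst) (unfold kf_def, measurable)
      then show ?thesis by simp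
    qed
    also have "\<dots> = 1" by (rule kf_total[OF a])
    finally show "(\<integral>\<^sup>+p. ennreal (norm ((\<lambda>(u::real, y::'a). \<Phi> u y) p)) \<partial>(lborel \<Otimes>\<^sub>M lborel)) < \<infinity>" by simp
  qed
  have "fourier (bk \<alpha> :: 'a \<Rightarrow> real) \<xi> = (CLINT y|lborel. (CLINT u|lborel. \<Phi> u y))"
    unfolding fourier_def
  proof (intro Bochner_Integration.integral_cong refl)
    fix y :: 'a
    have "complex_of_real (bk \<alpha> y) = (CLINT u|lborel. complex_of_real (kf \<alpha> u y))"
      unfolding bk_def by (rule integral_complex_of_real[symmetric])
    then show "complex_of_real (bk \<alpha> y) * cis (- 2 * pi * (y \<bullet> \<xi>)) = (CLINT u|lborel. \<Phi> u y)"
      unfolding \<Phi>_def by (simp only: integral_mult_left_zero)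
  qed
  also have "\<dots> = (CLINT u|lborel. (CLINT y|lborel. \<Phi> u y))"
    using lborel_pair.Fubini_integral[OF int] by simp
  also have "\<dots> = (CLINT u|lborel. complex_of_real (1 / Gamma (\<alpha> / 2) *
                     (indicator {0<..} u * u powr (\<alpha> / 2 - 1) * exp (- L * u))))"
  proof (intro Bochner_Integration.integral_cong refl)
    fix u :: real
    show "(CLINT y|lborel. \<Phi> u y) = complex_of_real (1 / Gamma (\<alpha> / 2) *
                     (indicator {0<..} u * u powr (\<alpha> / 2 - 1) * exp (- L * u)))"
    proof (cases "u > 0")
      case False
      then show ?thesis by (simp add: \<Phi>_def kf_def)
    next
      case True
      define c where "c = u powr (\<alpha> / 2 - 1) * exp (- u) * (4 * pi * u) powr (- n / 2) / Gamma (\<alpha> / 2)"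
      have b: "1 / (4 * u) > 0" using True by simp
      have "(CLINT y|lborel. \<Phi> u y) =
            (CLINT y|lborel. complex_of_real c * (complex_of_real (exp (- (1 / (4 * u)) * (norm y)\<^sup>2)) * cis (y \<bullet> (- (2 * pi) *\<^sub>R \<xi>))))"
      proof (intro Bochner_Integration.integral_cong refl)
        fix y :: 'a
        have "kf \<alpha> u y = c * exp (- (1 / (4 * u)) * (norm y)\<^sup>2)"
          using True by (simp add: kf_def c_def n_def)
        moreover have "- 2 * pi * (y \<bullet> \<xi>) = y \<bullet> (- (2 * pi) *\<^sub>R \<xi>)" by simp
        ultimately show "\<Phi> u y = complex_of_real c * (complex_of_real (exp (- (1 / (4 * u)) * (norm y)\<^sup>2)) * cis (y \<bullet> (- (2 * pi) *\<^sub>R \<xi>)))"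
          unfolding \<Phi>_def by simp
      qed
      also have "\<dots> = complex_of_real c * (CLINT y|lborel. complex_of_real (exp (- (1 / (4 * u)) * (norm y)\<^sup>2)) * cis (y \<bullet> (- (2 * pi) *\<^sub>R \<xi>)))"
        by (rule integral_mult_right_zero)
      also have "(CLINT y|lborel. complex_of_real (exp (- (1 / (4 * u)) * (norm (y::'a))\<^sup>2)) * cis (y \<bullet> (- (2 * pi) *\<^sub>R \<xi>))) =
          complex_of_real ((pi / (1 / (4 * u))) powr (n / 2) * exp (- (norm (- (2 * pi) *\<^sub>R \<xi>))\<^sup>2 / (4 * (1 / (4 * u)))))"
        unfolding n_def by (rule gauss_ft[OF b])
      also have "complex_of_real c * complex_of_real ((pi / (1 / (4 * u))) powr (n / 2) * exp (- (norm (- (2 * pi) *\<^sub>R \<xi>))\<^sup>2 / (4 * (1 / (4 * u))))) =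
                 complex_of_real (c * (4 * pi * u) powr (n / 2) * exp (- (4 * pi\<^sup>2 * (norm \<xi>)\<^sup>2) * u))"
      proof -
        have e1: "pi / (1 / (4 * u)) = 4 * pi * u" by simp
        have e2: "- (norm (- (2 * pi) *\<^sub>R \<xi>))\<^sup>2 / (4 * (1 / (4 * u))) = - (4 * pi\<^sup>2 * (norm \<xi>)\<^sup>2) * u"
          using True by (simp add: power_mult_distrib field_simps)
        show ?thesis unfolding e1 e2 by (simp only: of_real_mult mult.assoc)
      qed
      also have "c * (4 * pi * u) powr (n / 2) * exp (- (4 * pi\<^sup>2 * (norm \<xi>)\<^sup>2) * u) =
                 1 / Gamma (\<alpha> / 2) * (indicator {0<..} u * u powr (\<alpha> / 2 - 1) * exp (- L * u))"
      proof -
        have pq: "(4 * pi * u) powr (- n / 2) * (4 * pi * u) powr (n / 2) = 1"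
          using True by (simp add: powr_add[symmetric])
        have ee: "- u + - (4 * pi\<^sup>2 * (norm \<xi>)\<^sup>2) * u = - L * u" by (simp add: L_def algebra_simps)
        have ex: "exp (- u) * exp (- (4 * pi\<^sup>2 * (norm \<xi>)\<^sup>2) * u) = exp (- L * u)"
          by (simp only: exp_add[symmetric] ee)
        have "c * (4 * pi * u) powr (n / 2) * exp (- (4 * pi\<^sup>2 * (norm \<xi>)\<^sup>2) * u) =
              u powr (\<alpha> / 2 - 1) * (exp (- u) * exp (- (4 * pi\<^sup>2 * (norm \<xi>)\<^sup>2) * u)) *
              ((4 * pi * u) powr (- n / 2) * (4 * pi * u) powr (n / 2)) / Gamma (\<alpha> / 2)"
          unfolding c_def by (simp only: mult_ac times_divide_eq_left times_divide_eq_right)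
        also have "\<dots> = 1 / Gamma (\<alpha> / 2) * (indicator {0<..} u * u powr (\<alpha> / 2 - 1) * exp (- L * u))"
        proof -
          have i1: "indicator {0<..} u = (1::real)" using True by simp
          show ?thesis unfolding pq ex i1 by (rule aux1)
        qed
        finally show ?thesis .
      qed
      finally show ?thesis .
    qed
  qed
  also have "\<dots> = complex_of_real (LINT u|lborel. 1 / Gamma (\<alpha> / 2) *
                     (indicator {0<..} u * u powr (\<alpha> / 2 - 1) * exp (- L * u)))"
    by (rule integral_complex_of_real)
  also have "(LINT u|lborel. 1 / Gamma (\<alpha> / 2) * (indicator {0<..} u * u powr (\<alpha> / 2 - 1) * exp (- L * u))) =
             1 / Gamma (\<alpha> / 2) * (Gamma (\<alpha> / 2) / L powr (\<alpha> / 2))"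
    unfolding integral_mult_right_zero gamma_scale(2)[OF a2 L] by (rule refl)
  also have "\<dots> = L powr (- \<alpha> / 2)"
  proof -
    have "- \<alpha> / 2 = - (\<alpha> / 2)" by simp
    then have "L powr (- \<alpha> / 2) = 1 / L powr (\<alpha> / 2)" by (simp only: powr_minus_divide)
    then show ?thesis using aux2[of "Gamma (\<alpha> / 2)" "L powr (\<alpha> / 2)"] gp by simp
  qed
  finally show ?thesis unfolding L_def .
qed



lemma aux3: "x = b * c \<Longrightarrow> c * f = r \<Longrightarrow> (a::real) * x * d * e / g * f = a * b * d * e / g * r"
  by (simp add: mult_ac divide_inverse)

lemma kf_lower:
  fixes y :: "'a::euclidean_space"
  assumes a: "\<alpha> > 0" and an: "\<alpha> < real DIM('a)" and t: "t > 0" "t \<le> T" and y: "norm y \<le> t"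
  shows "ennreal ((4 * pi) powr (- real DIM('a) / 2) * 2 powr ((\<alpha> - real DIM('a)) / 2 - 1) *
            exp (- 2 * T\<^sup>2) * exp (- 1 / 4) / Gamma (\<alpha> / 2) * t powr (\<alpha> - real DIM('a)))
         \<le> (\<integral>\<^sup>+u. ennreal (kf \<alpha> u y) \<partial>lborel)"
proof -
  define n where "n = real DIM('a)"
  define \<beta> where "\<beta> = (\<alpha> - n) / 2 - 1"
  have \<beta>: "\<beta> \<le> 0" using an by (simp add: \<beta>_def n_def)
  have gp: "Gamma (\<alpha> / 2) > 0" using a by simp
  define M where "M = (4 * pi) powr (- n / 2) * (2 * t\<^sup>2) powr \<beta> * exp (- 2 * T\<^sup>2) * exp (- 1 / 4) / Gamma (\<alpha> / 2)"
  have M0: "M \<ge> 0" using gp by (simp add: M_def)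
  have low: "M \<le> kf \<alpha> u y" if u: "t\<^sup>2 \<le> u" "u \<le> 2 * t\<^sup>2" for u
  proof -
    have "t\<^sup>2 > 0" using t by simp
    then have u0: "u > 0" using u by linarith
    have P1: "u powr (\<alpha> / 2 - 1) * (4 * pi * u) powr (- n / 2) = (4 * pi) powr (- n / 2) * u powr \<beta>"
    proof -
      have "(4 * pi * u) powr (- n / 2) = (4 * pi) powr (- n / 2) * u powr (- n / 2)"
        by (rule powr_mult)
      moreover have "u powr (\<alpha> / 2 - 1) * u powr (- n / 2) = u powr \<beta>"
        by (simp only: powr_add[symmetric]) (rule arg_cong[where f="\<lambda>e. u powr e"], simp add: \<beta>_def field_simps)
      ultimately show ?thesis by (simp add: mult_ac)
    qed
    have "(2 * t\<^sup>2) powr \<beta> \<le> u powr \<beta>" using u u0 \<beta> by (intro powr_mono2') auto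
    then have A: "(4 * pi) powr (- n / 2) * (2 * t\<^sup>2) powr \<beta> \<le> u powr (\<alpha> / 2 - 1) * (4 * pi * u) powr (- n / 2)"
      unfolding P1 by (intro mult_left_mono) auto
    have T2: "t\<^sup>2 \<le> T\<^sup>2" using t by (intro power_mono) auto
    have B: "exp (- 2 * T\<^sup>2) \<le> exp (- u)" using u T2 by simp
    have "(1 / (4 * u)) * (norm y)\<^sup>2 \<le> (1 / (4 * u)) * u"
    proof (intro mult_left_mono)
      have "(norm y)\<^sup>2 \<le> t\<^sup>2" using y by (intro power_mono) auto
      then show "(norm y)\<^sup>2 \<le> u" using u by linarith
    qed (use u0 in simp)
    also have "(1 / (4 * u)) * u = 1 / 4" using u0 by simp
    finally have C: "exp (- 1 / 4) \<le> exp (- (1 / (4 * u)) * (norm y)\<^sup>2)" by simp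
    have "(4 * pi) powr (- n / 2) * (2 * t\<^sup>2) powr \<beta> * exp (- 2 * T\<^sup>2) * exp (- 1 / 4) \<le>
          u powr (\<alpha> / 2 - 1) * (4 * pi * u) powr (- n / 2) * exp (- u) * exp (- (1 / (4 * u)) * (norm y)\<^sup>2)"
      by (intro mult_mono A B C) auto
    then have "M \<le> (u powr (\<alpha> / 2 - 1) * (4 * pi * u) powr (- n / 2) * exp (- u) * exp (- (1 / (4 * u)) * (norm y)\<^sup>2)) / Gamma (\<alpha> / 2)"
      unfolding M_def using gp by (intro divide_right_mono) auto
    also have "\<dots> = kf \<alpha> u y"
    proof -
      have i1: "indicator {0<..} u = (1::real)" using u0 by simp
      show ?thesis unfolding kf_def n_def i1 by (simp only: mult_1_left mult_ac)
    qed
    finally show ?thesis .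
  qed
  have "(\<integral>\<^sup>+u. ennreal M * indicator {t\<^sup>2 .. 2 * t\<^sup>2} u \<partial>lborel) \<le> (\<integral>\<^sup>+u. ennreal (kf \<alpha> u y) \<partial>lborel)"
    by (intro nn_integral_mono) (auto simp: indicator_def intro!: ennreal_leI low)
  moreover have "(\<integral>\<^sup>+u. ennreal M * indicator {t\<^sup>2 .. 2 * t\<^sup>2} u \<partial>lborel) = ennreal (M * t\<^sup>2)"
    using M0 by (subst nn_integral_cmult_indicator) (auto simp: ennreal_mult)
  moreover have "M * t\<^sup>2 = (4 * pi) powr (- real DIM('a) / 2) * 2 powr ((\<alpha> - real DIM('a)) / 2 - 1) *
            exp (- 2 * T\<^sup>2) * exp (- 1 / 4) / Gamma (\<alpha> / 2) * t powr (\<alpha> - real DIM('a))"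
  proof -
    have "(2 * t\<^sup>2) powr \<beta> = 2 powr \<beta> * (t\<^sup>2) powr \<beta>" by (rule powr_mult)
    moreover have "(t\<^sup>2) powr \<beta> * t\<^sup>2 = t powr (\<alpha> - n)"
    proof -
      have t2: "t\<^sup>2 = t powr 2" using t by (simp add: powr_numeral)
      have "(t\<^sup>2) powr \<beta> = t powr (2 * \<beta>)" unfolding t2 by (simp only: powr_powr)
      moreover note t2
      ultimately have "(t\<^sup>2) powr \<beta> * t\<^sup>2 = t powr (2 * \<beta> + 2)" by (simp add: powr_add)
      also have "2 * \<beta> + 2 = \<alpha> - n" by (simp add: \<beta>_def field_simps)
      finally show ?thesis .
    qed
    ultimately have "M * t\<^sup>2 = (4 * pi) powr (- n / 2) * 2 powr \<beta> * exp (- 2 * T\<^sup>2) * exp (- 1 / 4) / Gamma (\<alpha> / 2) * t powr (\<alpha> - n)"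
      unfolding M_def by (simp only: aux3)
    then show ?thesis by (simp only: n_def \<beta>_def)
  qed
  ultimately show ?thesis by simp
qed


lemma poisson_const_nonneg: "poisson_const TYPE('a::euclidean_space) \<ge> 0"
proof -
  have "(LINT x|lborel. poisson_shape 1 (x::'a)) \<ge> 0"
    by (intro integral_nonneg_AE AE_I2 shape_nonneg) simp
  then show ?thesis unfolding poisson_const_def by simp
qed

lemma poisson_nonneg: "t > 0 \<Longrightarrow> poisson t x \<ge> 0"
  unfolding poisson_def by (intro mult_nonneg_nonneg poisson_const_nonneg shape_nonneg)

lemma t_powr_combine: "t > 0 \<Longrightarrow> t powr (\<alpha> - real n) * t ^ n = t powr (\<alpha>::real)"
  by (simp add: powr_realpow[symmetric] powr_add[symmetric])

lemma conv_bk_lower: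
  fixes w :: "'a::euclidean_space"
  assumes a: "\<alpha> > 0" and an: "\<alpha> < real DIM('a)" and t: "t > 0" "t \<le> T"
  shows "(4 * pi) powr (- real DIM('a) / 2) * 2 powr ((\<alpha> - real DIM('a)) / 2 - 1) *
            exp (- 2 * T\<^sup>2) * exp (- 1 / 4) / Gamma (\<alpha> / 2) * 3 powr (- ((real DIM('a) + 1) / 2)) *
            measure lborel (ball (0::'a) 1) * t powr \<alpha> * poisson t w \<le> conv (bk \<alpha>) (poisson t) w"
proof -
  define K where "K = (4 * pi) powr (- real DIM('a) / 2) * 2 powr ((\<alpha> - real DIM('a)) / 2 - 1) *
            exp (- 2 * T\<^sup>2) * exp (- 1 / 4) / Gamma (\<alpha> / 2)"
  have K0: "K \<ge> 0" using a unfolding K_def by simp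
  define q where "q = 3 powr (- ((real DIM('a) + 1) / 2))"
  have q0: "q \<ge> 0" by (simp add: q_def)
  define V where "V = measure lborel (ball (0::'a) 1)"
  have V0: "V \<ge> 0" by (simp add: V_def)
  define c where "c = poisson_const TYPE('a)"
  have c0: "c \<ge> 0" using poisson_const_nonneg by (simp add: c_def)
  define f where "f y = bk \<alpha> y * poisson_shape t (w - y)" for y :: 'a
  have f0: "f y \<ge> 0" for y unfolding f_def by (intro mult_nonneg_nonneg bk_nonneg[OF a] shape_nonneg[OF t(1)])
  have [measurable]: "f \<in> borel_measurable borel" unfolding f_def[abs_def] by measurable
  have fint: "integrable lborel f"
    unfolding f_def[abs_def]
  proof (rule integrable_mult_bdd[OF bk_integrable[OF a]])
    show "(\<lambda>y. poisson_shape t (w - y)) \<in> borel_measurable borel" by measurable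
    fix y :: 'a
    show "\<bar>poisson_shape t (w - y)\<bar> \<le> t / (t\<^sup>2) powr ((real DIM('a) + 1) / 2)"
      using shape_nonneg[OF t(1), of "w - y"] shape_bound[OF t(1), of "w - y"] by simp
  qed
  have fin: "(\<integral>\<^sup>+y. ennreal (f y) \<partial>lborel) < top"
    using fint f0 by (simp add: integrable_iff_bounded)
  define X where "X = K * t powr (\<alpha> - real DIM('a)) * (q * poisson_shape t w)"
  have X0: "X \<ge> 0" unfolding X_def using K0 q0 t by (intro mult_nonneg_nonneg shape_nonneg[OF t(1)]) auto
  have "(\<integral>\<^sup>+y. ennreal X * indicator (ball (0::'a) t) y \<partial>lborel) \<le> (\<integral>\<^sup>+y. ennreal (f y) \<partial>lborel)"
  proof (rule nn_integral_mono_AE)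
    show "AE y in lborel. ennreal X * indicator (ball (0::'a) t) y \<le> ennreal (f y)"
      using bk_AE[OF a, where 'a='a]
    proof eventually_elim
      fix y :: 'a
      assume e: "ennreal (bk \<alpha> y) = (\<integral>\<^sup>+u. ennreal (kf \<alpha> u y) \<partial>lborel)"
      show "ennreal X * indicator (ball (0::'a) t) y \<le> ennreal (f y)"
      proof (cases "y \<in> ball (0::'a) t")
        case True
        then have ny: "norm y \<le> t" by simp
        have "ennreal (K * t powr (\<alpha> - real DIM('a))) \<le> ennreal (bk \<alpha> y)"
          unfolding e K_def by (rule kf_lower[OF a an t ny])
        then have k: "K * t powr (\<alpha> - real DIM('a)) \<le> bk \<alpha> y"
          by (rule ennreal_le_iff[OF bk_nonneg[OF a], THEN iffD1])
        have s: "q * poisson_shape t w \<le> poisson_shape t (w - y)"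
          unfolding q_def by (rule shape_lower[OF t(1) ny])
        have "X \<le> f y" unfolding X_def f_def
          by (intro mult_mono k s) (use K0 q0 shape_nonneg[OF t(1)] bk_nonneg[OF a] in \<open>auto intro: mult_nonneg_nonneg\<close>)
        then show ?thesis using True by (simp add: ennreal_leI)
      qed simp
    qed
  qed
  also have "(\<integral>\<^sup>+y. ennreal X * indicator (ball (0::'a) t) y \<partial>lborel) = ennreal X * emeasure lborel (ball (0::'a) t)"
    by (rule nn_integral_cmult_indicator) simp
  also have "emeasure lborel (ball (0::'a) t) = ennreal (t ^ DIM('a) * V)"
  proof -
    have "emeasure lborel (ball (0::'a) t) = ennreal (measure lborel (ball (0::'a) t))"
      using emeasure_lborel_ball_finite[of "0::'a" t] by (intro emeasure_eq_ennreal_measure) simp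
    also have "measure lborel (ball (0::'a) t) = t ^ DIM('a) * V"
      unfolding V_def using t by (intro content_ball_conv_unit_ball) simp
    finally show ?thesis .
  qed
  finally have le1: "ennreal (X * (t ^ DIM('a) * V)) \<le> (\<integral>\<^sup>+y. ennreal (f y) \<partial>lborel)"
    using X0 by (simp only: ennreal_mult')
  have "X * (t ^ DIM('a) * V) \<le> enn2real (\<integral>\<^sup>+y. ennreal (f y) \<partial>lborel)"
    using enn2real_mono[OF le1 fin] X0 V0 t by simp
  also have "enn2real (\<integral>\<^sup>+y. ennreal (f y) \<partial>lborel) = (LINT y|lborel. f y)"
    by (rule integral_eq_nn_integral[symmetric]) (auto simp: f0)
  finally have le2: "X * (t ^ DIM('a) * V) \<le> (LINT y|lborel. f y)" .
  have eqX: "X * (t ^ DIM('a) * V) = K * q * V * t powr \<alpha> * poisson_shape t w"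
  proof -
    have "X * (t ^ DIM('a) * V) = K * q * V * (t powr (\<alpha> - real DIM('a)) * t ^ DIM('a)) * poisson_shape t w"
      unfolding X_def by (simp only: mult_ac)
    also have "t powr (\<alpha> - real DIM('a)) * t ^ DIM('a) = t powr \<alpha>" by (rule t_powr_combine[OF t(1)])
    finally show ?thesis .
  qed
  have cv: "conv (bk \<alpha>) (poisson t) w = c * (LINT y|lborel. f y)"
    unfolding conv_def poisson_def f_def c_def
    by (simp only: integral_mult_right_zero[symmetric] mult.left_commute)
  have "K * q * V * t powr \<alpha> * poisson t w = c * (K * q * V * t powr \<alpha> * poisson_shape t w)"
    unfolding poisson_def c_def by (simp only: mult_ac)
  also have "\<dots> \<le> c * (LINT y|lborel. f y)"
    using le2 unfolding eqX by (rule mult_left_mono) (rule c0)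
  also have "\<dots> = conv (bk \<alpha>) (poisson t) w" by (rule cv[symmetric])
  finally have "K * q * V * t powr \<alpha> * poisson t w \<le> conv (bk \<alpha>) (poisson t) w" .
  then show ?thesis unfolding K_def q_def V_def .
qed



lemma conv_assoc_bound:
  fixes G P g :: "'a::euclidean_space \<Rightarrow> real"
  assumes G: "integrable lborel G" and [measurable]: "P \<in> borel_measurable borel" "g \<in> borel_measurable borel"
    and bnd: "\<And>v. (\<integral>\<^sup>+y. ennreal (\<bar>P y\<bar> * \<bar>g (v - y)\<bar>) \<partial>lborel) \<le> ennreal B"
  shows "conv P (conv G g) x = (LINT w|lborel. conv G P w * g (x - w))"
    and "integrable lborel (\<lambda>w. conv G P w * g (x - w))"
proof -
  have [measurable]: "G \<in> borel_measurable borel" using G by auto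
  define \<Phi> where "\<Phi> z y = G z * (P y * g (x - z - y))" for z y :: 'a
  define \<Psi> where "\<Psi> z w = G z * (P (w - z) * g (x - w))" for z w :: 'a
  have mPhi: "(\<lambda>(z::'a, y::'a). \<Phi> z y) \<in> borel_measurable (lborel \<Otimes>\<^sub>M lborel)"
    unfolding \<Phi>_def by measurable
  have mPsi: "(\<lambda>(w::'a, z::'a). \<Psi> z w) \<in> borel_measurable (lborel \<Otimes>\<^sub>M lborel)"
    unfolding \<Psi>_def by measurable
  have Gfin: "(\<integral>\<^sup>+z. ennreal \<bar>G z\<bar> \<partial>lborel) < top"
    using G by (simp add: integrable_iff_bounded)
  have inner: "(\<integral>\<^sup>+y. ennreal (\<bar>P y\<bar> * \<bar>g (x - z - y)\<bar>) \<partial>lborel) \<le> ennreal B" for z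
    using bnd[of "x - z"] .
  have intPhi: "integrable (lborel \<Otimes>\<^sub>M lborel) (\<lambda>(z::'a, y::'a). \<Phi> z y)"
  proof (rule integrableI_bounded[OF mPhi])
    have "(\<integral>\<^sup>+p. ennreal (norm ((\<lambda>(z::'a, y::'a). \<Phi> z y) p)) \<partial>(lborel \<Otimes>\<^sub>M lborel)) =
          (\<integral>\<^sup>+z. \<integral>\<^sup>+y. ennreal (norm (\<Phi> z y)) \<partial>lborel \<partial>lborel)"
      by (subst lborel.nn_integral_fst[symmetric]) (use mPhi in auto)
    also have "\<dots> = (\<integral>\<^sup>+z. ennreal \<bar>G z\<bar> * (\<integral>\<^sup>+y. ennreal (\<bar>P y\<bar> * \<bar>g (x - z - y)\<bar>) \<partial>lborel) \<partial>lborel)"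
    proof (intro nn_integral_cong)
      fix z :: 'a
      have "(\<integral>\<^sup>+y. ennreal (norm (\<Phi> z y)) \<partial>lborel) = (\<integral>\<^sup>+y. ennreal \<bar>G z\<bar> * ennreal (\<bar>P y\<bar> * \<bar>g (x - z - y)\<bar>) \<partial>lborel)"
        by (intro nn_integral_cong) (simp add: \<Phi>_def abs_mult ennreal_mult)
      also have "\<dots> = ennreal \<bar>G z\<bar> * (\<integral>\<^sup>+y. ennreal (\<bar>P y\<bar> * \<bar>g (x - z - y)\<bar>) \<partial>lborel)"
        by (rule nn_integral_cmult) measurable
      finally show "(\<integral>\<^sup>+y. ennreal (norm (\<Phi> z y)) \<partial>lborel) = ennreal \<bar>G z\<bar> * (\<integral>\<^sup>+y. ennreal (\<bar>P y\<bar> * \<bar>g (x - z - y)\<bar>) \<partial>lborel)" .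
    qed
    also have "\<dots> \<le> (\<integral>\<^sup>+z. ennreal \<bar>G z\<bar> * ennreal B \<partial>lborel)"
      by (intro nn_integral_mono mult_left_mono inner) auto
    also have "\<dots> = (\<integral>\<^sup>+z. ennreal \<bar>G z\<bar> \<partial>lborel) * ennreal B"
      by (rule nn_integral_multc) measurable
    also have "\<dots> < top" using Gfin by (simp add: ennreal_mult_less_top)
    finally show "(\<integral>\<^sup>+p. ennreal (norm ((\<lambda>(z::'a, y::'a). \<Phi> z y) p)) \<partial>(lborel \<Otimes>\<^sub>M lborel)) < \<infinity>" by simp
  qed
  have intPsi: "integrable (lborel \<Otimes>\<^sub>M lborel) (\<lambda>(w::'a, z::'a). \<Psi> z w)"
  proof (rule integrableI_bounded[OF mPsi])
    have "(\<integral>\<^sup>+p. ennreal (norm ((\<lambda>(w::'a, z::'a). \<Psi> z w) p)) \<partial>(lborel \<Otimes>\<^sub>M lborel)) =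
          (\<integral>\<^sup>+z. \<integral>\<^sup>+w. ennreal (norm (\<Psi> z w)) \<partial>lborel \<partial>lborel)"
      by (subst lborel_pair.nn_integral_snd[symmetric]) (use mPsi in auto)
    also have "\<dots> = (\<integral>\<^sup>+z. ennreal \<bar>G z\<bar> * (\<integral>\<^sup>+y. ennreal (\<bar>P y\<bar> * \<bar>g (x - z - y)\<bar>) \<partial>lborel) \<partial>lborel)"
    proof (intro nn_integral_cong)
      fix z :: 'a
      have "(\<integral>\<^sup>+w. ennreal (norm (\<Psi> z w)) \<partial>lborel) = (\<integral>\<^sup>+w. ennreal \<bar>G z\<bar> * ennreal (\<bar>P (w - z)\<bar> * \<bar>g (x - w)\<bar>) \<partial>lborel)"
        by (intro nn_integral_cong) (simp add: \<Psi>_def abs_mult ennreal_mult)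
      also have "\<dots> = ennreal \<bar>G z\<bar> * (\<integral>\<^sup>+w. ennreal (\<bar>P (w - z)\<bar> * \<bar>g (x - w)\<bar>) \<partial>lborel)"
        by (rule nn_integral_cmult) measurable
      also have "(\<integral>\<^sup>+w. ennreal (\<bar>P (w - z)\<bar> * \<bar>g (x - w)\<bar>) \<partial>lborel) =
                 (\<integral>\<^sup>+y. ennreal (\<bar>P y\<bar> * \<bar>g (x - z - y)\<bar>) \<partial>lborel)"
      proof -
        have "(\<integral>\<^sup>+w. ennreal (\<bar>P (w - z)\<bar> * \<bar>g (x - w)\<bar>) \<partial>lborel) =
                 (\<integral>\<^sup>+y. ennreal (\<bar>P (y + z - z)\<bar> * \<bar>g (x - (y + z))\<bar>) \<partial>lborel)"
          by (rule nn_integral_translate[symmetric, where f = "\<lambda>w. ennreal (\<bar>P (w - z)\<bar> * \<bar>g (x - w)\<bar>)"]) measurable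
        also have "\<dots> = (\<integral>\<^sup>+y. ennreal (\<bar>P y\<bar> * \<bar>g (x - z - y)\<bar>) \<partial>lborel)"
          by (simp add: algebra_simps)
        finally show ?thesis .
      qed
      finally show "(\<integral>\<^sup>+w. ennreal (norm (\<Psi> z w)) \<partial>lborel) = ennreal \<bar>G z\<bar> * (\<integral>\<^sup>+y. ennreal (\<bar>P y\<bar> * \<bar>g (x - z - y)\<bar>) \<partial>lborel)" .
    qed
    also have "\<dots> \<le> (\<integral>\<^sup>+z. ennreal \<bar>G z\<bar> * ennreal B \<partial>lborel)"
      by (intro nn_integral_mono mult_left_mono inner) auto
    also have "\<dots> = (\<integral>\<^sup>+z. ennreal \<bar>G z\<bar> \<partial>lborel) * ennreal B"
      by (rule nn_integral_multc) measurable
    also have "\<dots> < top" using Gfin by (simp add: ennreal_mult_less_top)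
    finally show "(\<integral>\<^sup>+p. ennreal (norm ((\<lambda>(w::'a, z::'a). \<Psi> z w) p)) \<partial>(lborel \<Otimes>\<^sub>M lborel)) < \<infinity>" by simp
  qed
  have eqw: "(LINT z|lborel. \<Psi> z w) = conv G P w * g (x - w)" for w
    unfolding \<Psi>_def conv_def by (simp only: mult.assoc[symmetric] integral_mult_left_zero)
  show "integrable lborel (\<lambda>w. conv G P w * g (x - w))"
    using lborel_pair.integrable_fst'[OF intPsi] by (simp add: eqw)
  have "conv P (conv G g) x = (LINT y|lborel. (LINT z|lborel. \<Phi> z y))"
    unfolding conv_def
  proof (intro Bochner_Integration.integral_cong refl)
    fix y :: 'a
    have "P y * (LINT z|lborel. G z * g (x - y - z)) = (LINT z|lborel. P y * (G z * g (x - y - z)))"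
      by (rule integral_mult_right_zero[symmetric])
    also have "\<dots> = (LINT z|lborel. \<Phi> z y)"
      by (intro Bochner_Integration.integral_cong refl) (simp add: \<Phi>_def algebra_simps)
    finally show "P y * (LINT z|lborel. G z * g (x - y - z)) = (LINT z|lborel. \<Phi> z y)" .
  qed
  also have "\<dots> = (LINT z|lborel. (LINT y|lborel. \<Phi> z y))"
    using lborel_pair.Fubini_integral[OF intPhi] by simp
  also have "\<dots> = (LINT z|lborel. (LINT w|lborel. \<Psi> z w))"
  proof (rule Bochner_Integration.integral_cong[OF refl])
    fix z :: 'a
    have "(LINT y|lborel. \<Phi> z y) = (LINT w|lborel. \<Phi> z (w + (- z)))"
      by (rule integral_translate[symmetric]) (unfold \<Phi>_def, measurable)
    also have "\<dots> = (LINT w|lborel. \<Psi> z w)"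
      by (intro Bochner_Integration.integral_cong refl) (simp add: \<Phi>_def \<Psi>_def algebra_simps)
    finally show "(LINT y|lborel. \<Phi> z y) = (LINT w|lborel. \<Psi> z w)" .
  qed
  also have "\<dots> = (LINT w|lborel. (LINT z|lborel. \<Psi> z w))"
    using lborel_pair.Fubini_integral[OF intPsi] by simp
  also have "\<dots> = (LINT w|lborel. conv G P w * g (x - w))"
    by (simp add: eqw)
  finally show "conv P (conv G g) x = (LINT w|lborel. conv G P w * g (x - w))" .
qed


lemma shape_integrable:
  assumes t: "t > 0" shows "integrable lborel (poisson_shape t :: 'a::euclidean_space \<Rightarrow> real)"
proof (rule integrableI_nonneg)
  show "(\<integral>\<^sup>+z. ennreal (poisson_shape t (z::'a)) \<partial>lborel) < \<infinity>"
    by (simp add: shape_nn_integral[OF t])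
qed (auto simp: shape_nonneg[OF t])

lemma poisson_integrable:
  assumes t: "t > 0" shows "integrable lborel (poisson t :: 'a::euclidean_space \<Rightarrow> real)"
  unfolding poisson_def[abs_def] using shape_integrable[OF t, where 'a='a] by simp

lemma le_one_plus_powr: "(x::real) \<ge> 0 \<Longrightarrow> p \<ge> 1 \<Longrightarrow> x \<le> 1 + x powr p"
proof (cases "x \<le> 1")
  case True
  moreover assume "x \<ge> 0"
  ultimately show ?thesis by (smt (verit) powr_ge_zero)
next
  case False
  assume p: "p \<ge> 1"
  have "x = x powr 1" using False by simp
  also have "\<dots> \<le> x powr p" using False p by (intro powr_mono) auto
  finally show ?thesis by simp
qed

lemma poisson_g_bound:
  fixes g :: "'a::euclidean_space \<Rightarrow> real"
  assumes t: "t > 0" and [measurable]: "g \<in> borel_measurable borel"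
    and H: "(\<exists>p\<ge>1. integrable lborel (\<lambda>y. \<bar>g y\<bar> powr p)) \<or> (\<exists>M. AE y in lborel. \<bar>g y\<bar> \<le> M)"
  shows "\<exists>B. \<forall>v. (\<integral>\<^sup>+y. ennreal (\<bar>poisson t y\<bar> * \<bar>g (v - y)\<bar>) \<partial>lborel) \<le> ennreal B"
proof -
  define Pm where "Pm = \<bar>poisson_const TYPE('a)\<bar> * (t / (t\<^sup>2) powr ((real DIM('a) + 1) / 2))"
  have Pm: "\<bar>poisson t y\<bar> \<le> Pm" for y :: 'a
  proof -
    have "\<bar>poisson t y\<bar> = \<bar>poisson_const TYPE('a)\<bar> * poisson_shape t y"
      using shape_nonneg[OF t, of y] by (simp add: poisson_def abs_mult)
    also have "\<dots> \<le> Pm" unfolding Pm_def by (intro mult_left_mono shape_bound t) simp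
    finally show ?thesis .
  qed
  have Pm0: "Pm \<ge> 0" using Pm[of 0] by linarith
  have Pint: "integrable lborel (\<lambda>y::'a. \<bar>poisson t y\<bar>)" by (rule integrable_abs[OF poisson_integrable[OF t]])
  define IP where "IP = (LINT y|lborel. \<bar>poisson t (y::'a)\<bar>)"
  have IP: "(\<integral>\<^sup>+y. ennreal \<bar>poisson t (y::'a)\<bar> \<partial>lborel) = ennreal IP"
    unfolding IP_def by (rule nn_integral_eq_integral[OF Pint]) simp
  from H show ?thesis
  proof
    assume "\<exists>p\<ge>1. integrable lborel (\<lambda>y. \<bar>g y\<bar> powr p)"
    then obtain p where p: "p \<ge> 1" and gi: "integrable lborel (\<lambda>y. \<bar>g y\<bar> powr p)" by blast
    define Ig where "Ig = (LINT y|lborel. \<bar>g y\<bar> powr p)"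
    have Ig: "(\<integral>\<^sup>+y. ennreal (\<bar>g y\<bar> powr p) \<partial>lborel) = ennreal Ig"
      unfolding Ig_def by (rule nn_integral_eq_integral[OF gi]) simp
    show ?thesis
    proof (intro exI allI)
      fix v :: 'a
      have "(\<integral>\<^sup>+y. ennreal (\<bar>poisson t y\<bar> * \<bar>g (v - y)\<bar>) \<partial>lborel) \<le>
            (\<integral>\<^sup>+y. ennreal \<bar>poisson t y\<bar> + ennreal Pm * ennreal (\<bar>g (v - y)\<bar> powr p) \<partial>lborel)"
      proof (intro nn_integral_mono)
        fix y :: 'a
        have "\<bar>poisson t y\<bar> * \<bar>g (v - y)\<bar> \<le> \<bar>poisson t y\<bar> * (1 + \<bar>g (v - y)\<bar> powr p)"
          by (intro mult_left_mono le_one_plus_powr p) auto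
        also have "\<dots> = \<bar>poisson t y\<bar> + \<bar>poisson t y\<bar> * \<bar>g (v - y)\<bar> powr p" by (simp add: algebra_simps)
        also have "\<dots> \<le> \<bar>poisson t y\<bar> + Pm * \<bar>g (v - y)\<bar> powr p"
          by (intro add_left_mono mult_right_mono Pm) simp
        finally have "\<bar>poisson t y\<bar> * \<bar>g (v - y)\<bar> \<le> \<bar>poisson t y\<bar> + Pm * \<bar>g (v - y)\<bar> powr p" .
        then show "ennreal (\<bar>poisson t y\<bar> * \<bar>g (v - y)\<bar>) \<le> ennreal \<bar>poisson t y\<bar> + ennreal Pm * ennreal (\<bar>g (v - y)\<bar> powr p)"
          using Pm0 by (simp add: ennreal_plus[symmetric] ennreal_mult[symmetric] del: ennreal_plus)
      qed
      also have "\<dots> = (\<integral>\<^sup>+y. ennreal \<bar>poisson t (y::'a)\<bar> \<partial>lborel) + ennreal Pm * (\<integral>\<^sup>+y. ennreal (\<bar>g (v - y)\<bar> powr p) \<partial>lborel)"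
      proof -
        have "(\<integral>\<^sup>+y. ennreal \<bar>poisson t (y::'a)\<bar> + ennreal Pm * ennreal (\<bar>g (v - y)\<bar> powr p) \<partial>lborel) =
              (\<integral>\<^sup>+y. ennreal \<bar>poisson t (y::'a)\<bar> \<partial>lborel) + (\<integral>\<^sup>+y. ennreal Pm * ennreal (\<bar>g (v - y)\<bar> powr p) \<partial>lborel)"
          by (rule nn_integral_add) measurable
        also have "(\<integral>\<^sup>+y. ennreal Pm * ennreal (\<bar>g (v - y)\<bar> powr p) \<partial>lborel) = ennreal Pm * (\<integral>\<^sup>+y. ennreal (\<bar>g (v - y)\<bar> powr p) \<partial>lborel)"
          by (rule nn_integral_cmult) measurable
        finally show ?thesis .
      qed
      also have "(\<integral>\<^sup>+y. ennreal (\<bar>g (v - y)\<bar> powr p) \<partial>lborel) = (\<integral>\<^sup>+y. ennreal (\<bar>g y\<bar> powr p) \<partial>lborel)"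
        by (rule nn_integral_reflect[where f = "\<lambda>y. ennreal (\<bar>g y\<bar> powr p)"]) measurable
      finally have "(\<integral>\<^sup>+y. ennreal (\<bar>poisson t y\<bar> * \<bar>g (v - y)\<bar>) \<partial>lborel) \<le>
          (\<integral>\<^sup>+y. ennreal \<bar>poisson t (y::'a)\<bar> \<partial>lborel) + ennreal Pm * (\<integral>\<^sup>+y. ennreal (\<bar>g y\<bar> powr p) \<partial>lborel)" .
      moreover have IP0: "IP \<ge> 0" unfolding IP_def by (intro integral_nonneg_AE) auto
      moreover have Ig0: "Ig \<ge> 0" unfolding Ig_def by (intro integral_nonneg_AE) auto
      ultimately show "(\<integral>\<^sup>+y. ennreal (\<bar>poisson t y\<bar> * \<bar>g (v - y)\<bar>) \<partial>lborel) \<le> ennreal (IP + Pm * Ig)"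
        unfolding IP Ig using Pm0 by (simp add: ennreal_plus ennreal_mult mult_nonneg_nonneg)
    qed
  next
    assume "\<exists>M. AE y in lborel. \<bar>g y\<bar> \<le> M"
    then obtain M where M: "AE y in lborel. \<bar>g y\<bar> \<le> M" by blast
    define M' where "M' = max M 0"
    show ?thesis
    proof (intro exI allI)
      fix v :: 'a
      have Mv: "AE y in lborel. \<bar>g (v - y)\<bar> \<le> M"
        by (rule AE_reflect[OF M]) measurable
      have "AE y in lborel. ennreal (\<bar>poisson t y\<bar> * \<bar>g (v - y)\<bar>) \<le> ennreal M' * ennreal \<bar>poisson t (y::'a)\<bar>"
        using Mv
      proof eventually_elim
        fix y assume "\<bar>g (v - y)\<bar> \<le> M"
        then have gm: "\<bar>g (v - y)\<bar> \<le> M'" unfolding M'_def by linarith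
        have "\<bar>poisson t y\<bar> * \<bar>g (v - y)\<bar> \<le> \<bar>poisson t y\<bar> * M'"
          by (rule mult_left_mono[OF gm]) simp
        then have "\<bar>poisson t y\<bar> * \<bar>g (v - y)\<bar> \<le> M' * \<bar>poisson t y\<bar>" by (simp add: mult.commute)
        moreover have "ennreal M' * ennreal \<bar>poisson t y\<bar> = ennreal (M' * \<bar>poisson t y\<bar>)"
          by (rule ennreal_mult'[symmetric]) (simp add: M'_def)
        ultimately show "ennreal (\<bar>poisson t y\<bar> * \<bar>g (v - y)\<bar>) \<le> ennreal M' * ennreal \<bar>poisson t y\<bar>"
          by (simp add: ennreal_leI)
      qed
      then have "(\<integral>\<^sup>+y. ennreal (\<bar>poisson t y\<bar> * \<bar>g (v - y)\<bar>) \<partial>lborel) \<le> (\<integral>\<^sup>+y. ennreal M' * ennreal \<bar>poisson t (y::'a)\<bar> \<partial>lborel)"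
        by (rule nn_integral_mono_AE)
      also have "\<dots> = ennreal M' * ennreal IP"
        by (subst nn_integral_cmult) (auto simp: IP)
      also have "ennreal M' * ennreal IP = ennreal (M' * IP)"
        by (rule ennreal_mult'[symmetric]) (simp add: M'_def)
      finally show "(\<integral>\<^sup>+y. ennreal (\<bar>poisson t y\<bar> * \<bar>g (v - y)\<bar>) \<partial>lborel) \<le> ennreal (M' * IP)" .
    qed
  qed
qed



lemma aux_div: "(c::real) > 0 \<Longrightarrow> c * X \<le> Y \<Longrightarrow> X \<le> 1 / c * Y"
  by (simp add: field_simps mult.commute)

lemma bessel_kernel_props:
  assumes a: "\<alpha> > 0"
  shows "(bessel_kernel \<alpha> :: 'a::euclidean_space \<Rightarrow> real) \<in> borel_measurable lborel \<and> integrable lborel (bessel_kernel \<alpha> :: 'a \<Rightarrow> real) \<and>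
      (\<forall>\<xi>. fourier (bessel_kernel \<alpha> :: 'a \<Rightarrow> real) \<xi> = complex_of_real ((1 + 4 * pi\<^sup>2 * (norm \<xi>)\<^sup>2) powr (- \<alpha> / 2)))"
proof -
  define P where "P = (\<lambda>G::'a \<Rightarrow> real. G \<in> borel_measurable lborel \<and> integrable lborel G \<and>
      (\<forall>\<xi>. fourier G \<xi> = complex_of_real ((1 + 4 * pi\<^sup>2 * (norm \<xi>)\<^sup>2) powr (- \<alpha> / 2))))"
  have "P (bk \<alpha>)" unfolding P_def
    by (intro conjI allI bk_fourier[OF a] bk_integrable[OF a]) simp
  then have "P (SOME G. P G)" by (rule someI[of P])
  moreover have "bessel_kernel \<alpha> = (SOME G. P G)" unfolding bessel_kernel_def P_def by (rule refl)
  ultimately show ?thesis unfolding P_def by simp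
qed

lemma conv_bessel_bk:
  assumes a: "\<alpha> > 0" and t: "t > 0"
  shows "conv (bessel_kernel \<alpha>) (poisson t) w = conv (bk \<alpha>) (poisson t) (w::'a::euclidean_space)"
proof (rule conv_poisson_eq[OF _ bk_integrable[OF a] _ t])
  show "integrable lborel (bessel_kernel \<alpha> :: 'a \<Rightarrow> real)" using bessel_kernel_props[OF a] by blast
  fix \<xi> :: 'a
  have e1: "fourier (bessel_kernel \<alpha> :: 'a \<Rightarrow> real) \<xi> = complex_of_real ((1 + 4 * pi\<^sup>2 * (norm \<xi>)\<^sup>2) powr (- \<alpha> / 2))"
    using bessel_kernel_props[OF a, where 'a='a] by blast
  show "fourier (bessel_kernel \<alpha>) \<xi> = fourier (bk \<alpha>) \<xi>"
    unfolding e1 bk_fourier[OF a] ..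
qed

theorem lemma3p6:
  fixes \<alpha> T :: real
  assumes "0 \<le> \<alpha>" "\<alpha> < real DIM('a::euclidean_space)" "T > 0"
  shows "\<exists>C>0.
    (\<forall>(x::'a) t. 0 < t \<and> t \<le> T \<longrightarrow>
        t powr \<alpha> * poisson t x \<le> C * bessel_pot \<alpha> (poisson t) x) \<and>
    (\<forall>g :: 'a \<Rightarrow> real.
        g \<in> borel_measurable lborel \<and> (AE y in lborel. 0 \<le> g y) \<and>
        ((\<exists>p\<ge>1. integrable lborel (\<lambda>y. \<bar>g y\<bar> powr p)) \<or>
         (\<exists>M. AE y in lborel. \<bar>g y\<bar> \<le> M)) \<longrightarrow>
        (\<forall>x t. 0 < t \<and> t \<le> T \<longrightarrow>
           t powr \<alpha> * conv (poisson t) g x \<le> C * conv (poisson t) (bessel_pot \<alpha> g) x))"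
proof (cases "\<alpha> = 0")
  case True
  show ?thesis
  proof (intro exI[of _ 1] conjI allI impI)
    fix x :: 'a and t :: real assume "0 < t \<and> t \<le> T"
    then have "t powr \<alpha> = 1" using True by simp
    then show "t powr \<alpha> * poisson t x \<le> 1 * bessel_pot \<alpha> (poisson t) x"
      using True by (simp add: bessel_pot_def)
  next
    fix g :: "'a \<Rightarrow> real" and x :: 'a and t :: real assume "0 < t \<and> t \<le> T"
    then have "t powr \<alpha> = 1" using True by simp
    then show "t powr \<alpha> * conv (poisson t) g x \<le> 1 * conv (poisson t) (bessel_pot \<alpha> g) x"
      using True by (simp add: bessel_pot_def)
  qed simp
next
  case False
  then have a: "\<alpha> > 0" using assms(1) by simp
  have an: "\<alpha> < real DIM('a)" by (rule assms(2))
  define C' where "C' = (4 * pi) powr (- real DIM('a) / 2) * 2 powr ((\<alpha> - real DIM('a)) / 2 - 1) *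
            exp (- 2 * T\<^sup>2) * exp (- 1 / 4) / Gamma (\<alpha> / 2) * 3 powr (- ((real DIM('a) + 1) / 2)) *
            measure lborel (ball (0::'a) 1)"
  have C'pos: "C' > 0"
  proof -
    have "measure lborel (ball (0::'a) 1) > 0" by (rule content_ball_pos) simp
    moreover have "Gamma (\<alpha> / 2) > 0" using a by simp
    ultimately show ?thesis unfolding C'_def by (intro mult_pos_pos divide_pos_pos) auto
  qed
  have low: "C' * t powr \<alpha> * poisson t w \<le> conv (bessel_kernel \<alpha>) (poisson t) w"
    if t: "0 < t" "t \<le> T" for t and w :: 'a
    unfolding conv_bessel_bk[OF a t(1)] C'_def by (rule conv_bk_lower[OF a an t])
  have bp: "bessel_pot \<alpha> f = conv (bessel_kernel \<alpha>) f" for f :: "'a \<Rightarrow> real"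
    using False by (simp add: bessel_pot_def)
  show ?thesis
  proof (intro exI[of _ "1 / C'"] conjI allI impI)
    show "0 < 1 / C'" using C'pos by simp
  next
    fix x :: 'a and t :: real assume t: "0 < t \<and> t \<le> T"
    have "C' * (t powr \<alpha> * poisson t x) \<le> bessel_pot \<alpha> (poisson t) x"
      unfolding bp using low[of t x] t by (simp only: mult.assoc)
    then show "t powr \<alpha> * poisson t x \<le> 1 / C' * bessel_pot \<alpha> (poisson t) x"
      by (rule aux_div[OF C'pos])
  next
    fix g :: "'a \<Rightarrow> real" and x :: 'a and t :: real
    assume hg: "g \<in> borel_measurable lborel \<and> (AE y in lborel. 0 \<le> g y) \<and>
        ((\<exists>p\<ge>1. integrable lborel (\<lambda>y. \<bar>g y\<bar> powr p)) \<or> (\<exists>M. AE y in lborel. \<bar>g y\<bar> \<le> M))"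
      and t: "0 < t \<and> t \<le> T"
    have t0: "t > 0" and tT: "t \<le> T" using t by auto
    have gm[measurable]: "g \<in> borel_measurable borel" using hg by simp
    have G: "integrable lborel (bessel_kernel \<alpha> :: 'a \<Rightarrow> real)" using bessel_kernel_props[OF a] by blast
    obtain B where B: "\<And>v. (\<integral>\<^sup>+y. ennreal (\<bar>poisson t y\<bar> * \<bar>g (v - y)\<bar>) \<partial>lborel) \<le> ennreal B"
      using poisson_g_bound[OF t0 gm] hg by blast
    note AS = conv_assoc_bound[OF G poisson_measurable gm B, of x]
    have Pg_int: "integrable lborel (\<lambda>w. poisson t w * g (x - w))"
    proof (rule integrableI_bounded)
      show "(\<lambda>w. poisson t w * g (x - w)) \<in> borel_measurable lborel" by measurable
      have "(\<integral>\<^sup>+w. ennreal (norm (poisson t w * g (x - w))) \<partial>lborel) \<le> ennreal B"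
        using B[of x] by (simp add: abs_mult)
      then show "(\<integral>\<^sup>+w. ennreal (norm (poisson t w * g (x - w))) \<partial>lborel) < \<infinity>"
        by (simp add: le_less_trans)
    qed
    have gx: "AE w in lborel. 0 \<le> g (x - w)"
      by (rule AE_reflect) (use hg in auto)
    have "(LINT w|lborel. C' * t powr \<alpha> * poisson t w * g (x - w)) = (LINT w|lborel. (C' * t powr \<alpha>) * (poisson t w * g (x - w)))"
      by (simp only: mult.assoc)
    also have "\<dots> = (C' * t powr \<alpha>) * conv (poisson t) g x"
      unfolding conv_def by (rule integral_mult_right_zero)
    finally have "C' * (t powr \<alpha> * conv (poisson t) g x) = (LINT w|lborel. C' * t powr \<alpha> * poisson t w * g (x - w))"
      by (simp only: mult.assoc)
    also have "\<dots> \<le> (LINT w|lborel. conv (bessel_kernel \<alpha>) (poisson t) w * g (x - w))"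
    proof (rule integral_mono_AE)
      show "integrable lborel (\<lambda>w. C' * t powr \<alpha> * poisson t w * g (x - w))"
        using Pg_int by (simp add: mult.assoc)
      show "integrable lborel (\<lambda>w. conv (bessel_kernel \<alpha>) (poisson t) w * g (x - w))"
        by (rule AS(2))
      show "AE w in lborel. C' * t powr \<alpha> * poisson t w * g (x - w) \<le> conv (bessel_kernel \<alpha>) (poisson t) w * g (x - w)"
        using gx
      proof eventually_elim
        fix w assume "0 \<le> g (x - w)"
        then show "C' * t powr \<alpha> * poisson t w * g (x - w) \<le> conv (bessel_kernel \<alpha>) (poisson t) w * g (x - w)"
          by (intro mult_right_mono low t0 tT)
      qed
    qed
    also have "\<dots> = conv (poisson t) (bessel_pot \<alpha> g) x"
      unfolding bp by (rule AS(1)[symmetric])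
    finally show "t powr \<alpha> * conv (poisson t) g x \<le> 1 / C' * conv (poisson t) (bessel_pot \<alpha> g) x"
      by (rule aux_div[OF C'pos])
  qed
qed

end
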